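(* Let $K$ be a compact Hausdorff space and let $\mu\in Seq^{\alpha}(\mathrm{co}\,\Delta_K)$ for some ordinal $\alpha<\omega_1$. If $\nu\in M(K)$ is absolutely continuous with respect to $\mu$, then $\nu\in Seq^{\alpha+1}(\mathrm{span}\,\Delta_K)$. If in addition $\nu\in M^+(K)$, then $\nu\in Seq^{\alpha+1}(M^+(K)\cap \mathrm{span}\,\Delta_K)$.
   Context: $C(K)$ is the Banach space of continuous real-valued functions on $K$, and $M(K)=C(K)^*$ is the space of Radon signed measures on $K$, always equipped with the weak$^*$ topology. $M^+(K)$ denotes the non-negative Radon measures. For $t\in K$, $\delta_t$ is the Dirac measure at $t$, $\Delta_K=\{\delta_t:t\in K\}$, $\mathrm{co}\,\Delta_K$ is its convex hull and $\mathrm{span}\,\Delta_K$ its linear span in $M(K)$. For $A\subseteq M(K)$, define $Seq^0(A)=A$, $Seq^{\alpha+1}(A)$ = the set of all limits of weak$^*$-convergent sequences in $Seq^{\alpha}(A)$, and $Seq^\alpha(A)=\bigcup_{\beta<\alpha}Seq^\beta(A)$ for limit ordinals $\alpha$. *)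

theory Defs
  imports "HOL-Probability.Probability"
begin

text \<open>Throughout, the compact Hausdorff space K is the whole of a type 'a of class t2_space
with compact UNIV.  A (signed) measure on K is represented as a real-valued set function on the
Borel sets of K, taking the value 0 on non-Borel sets (canonical representative).\<close>

definition real_countably_additive :: "('a::topological_space set \<Rightarrow> real) \<Rightarrow> bool" where
  "real_countably_additive m \<longleftrightarrow>
     (\<forall>A :: nat \<Rightarrow> 'a set. range A \<subseteq> sets borel \<longrightarrow> disjoint_family A \<longrightarrow>
        (\<lambda>i. m (A i)) sums m (\<Union>i. A i))"

definition radon_pos :: "('a::topological_space set \<Rightarrow> real) \<Rightarrow> bool" where
  "radon_pos m \<longleftrightarrow>
     (\<forall>B. B \<notin> sets borel \<longrightarrow> m B = 0) \<and>
     (\<forall>B\<in>sets borel. 0 \<le> m B) \<and>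
     real_countably_additive m \<and>
     (\<forall>B\<in>sets borel. m B = (SUP C\<in>{C. compact C \<and> C \<subseteq> B}. m C))"

definition MK :: "('a::topological_space set \<Rightarrow> real) set" where
  "MK = {\<nu>. \<exists>m1 m2. radon_pos m1 \<and> radon_pos m2 \<and> \<nu> = (\<lambda>B. m1 B - m2 B)}"

definition MK_pos :: "('a::topological_space set \<Rightarrow> real) set" where
  "MK_pos = {\<nu>\<in>MK. \<forall>B. 0 \<le> \<nu> B}"

definition pos_var :: "('a::topological_space set \<Rightarrow> real) \<Rightarrow> 'a set \<Rightarrow> real" where
  "pos_var \<nu> B = (if B \<in> sets borel then (SUP C\<in>{C\<in>sets borel. C \<subseteq> B}. \<nu> C) else 0)"

definition neg_var :: "('a::topological_space set \<Rightarrow> real) \<Rightarrow> 'a set \<Rightarrow> real" where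
  "neg_var \<nu> = pos_var (\<lambda>B. - \<nu> B)"

definition tot_var :: "('a::topological_space set \<Rightarrow> real) \<Rightarrow> 'a set \<Rightarrow> real" where
  "tot_var \<nu> B = pos_var \<nu> B + neg_var \<nu> B"

definition to_measure :: "('a::topological_space set \<Rightarrow> real) \<Rightarrow> 'a measure" where
  "to_measure m = measure_of UNIV (sets borel) (\<lambda>B. ennreal (m B))"

definition sint :: "('a::topological_space set \<Rightarrow> real) \<Rightarrow> ('a \<Rightarrow> real) \<Rightarrow> real" where
  "sint \<nu> f = integral\<^sup>L (to_measure (pos_var \<nu>)) f - integral\<^sup>L (to_measure (neg_var \<nu>)) f"

text \<open>Weak* convergence in M(K)=C(K)^*: convergence against every continuous real function.\<close>
definition wstar_conv :: "(nat \<Rightarrow> 'a::topological_space set \<Rightarrow> real) \<Rightarrow> ('a set \<Rightarrow> real) \<Rightarrow> bool" where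
  "wstar_conv s \<nu> \<longleftrightarrow>
     (\<forall>f::'a \<Rightarrow> real. continuous_on UNIV f \<longrightarrow> (\<lambda>n. sint (s n) f) \<longlonglongrightarrow> sint \<nu> f)"

definition seq_cl :: "('a::topological_space set \<Rightarrow> real) set \<Rightarrow> ('a set \<Rightarrow> real) set" where
  "seq_cl A = {\<nu>\<in>MK. \<exists>s. (\<forall>n. s n \<in> A) \<and> wstar_conv s \<nu>}"

text \<open>Ordinals are represented as elements of the field of a well-order r.
 An element i with no strict predecessor is 0; i is the successor of j if j is its immediate
 strict predecessor; otherwise i is a limit.\<close>
definition imm_pred :: "'i rel \<Rightarrow> 'i \<Rightarrow> 'i \<Rightarrow> bool" where
  "imm_pred r j i \<longleftrightarrow> (j, i) \<in> r \<and> j \<noteq> i \<and> (\<forall>k. (j, k) \<in> r \<and> (k, i) \<in> r \<longrightarrow> k = j \<or> k = i)"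

definition Seq :: "'i rel \<Rightarrow> 'i \<Rightarrow> ('a::topological_space set \<Rightarrow> real) set \<Rightarrow> ('a set \<Rightarrow> real) set" where
  "Seq r \<alpha> A = wfrec (r - Id)
     (\<lambda>S i. if Order_Relation.underS r i = {} then A
            else if (\<exists>j. imm_pred r j i) then seq_cl (S (SOME j. imm_pred r j i))
            else (\<Union>j\<in>Order_Relation.underS r i. S j)) \<alpha>"

definition dirac :: "'a::topological_space \<Rightarrow> 'a set \<Rightarrow> real" where
  "dirac t B = (if B \<in> sets borel \<and> t \<in> B then 1 else 0)"

definition co_Delta :: "('a::topological_space set \<Rightarrow> real) set" where
  "co_Delta = {(\<lambda>B. \<Sum>t\<in>F. c t * dirac t B) | F c. finite F \<and> F \<noteq> {} \<and>
                 (\<forall>t\<in>F. 0 \<le> c t) \<and> sum c F = 1}"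

definition span_Delta :: "('a::topological_space set \<Rightarrow> real) set" where
  "span_Delta = {(\<lambda>B. \<Sum>t\<in>F. c t * dirac t B) | F c. finite F}"

definition abs_cont :: "('a::topological_space set \<Rightarrow> real) \<Rightarrow> ('a set \<Rightarrow> real) \<Rightarrow> bool" where
  "abs_cont \<nu> \<mu> \<longleftrightarrow> (\<forall>B\<in>sets borel. tot_var \<mu> B = 0 \<longrightarrow> \<nu> B = 0)"

end

theory Submission
  imports Defs
begin

lemma sigma_sets_borel[simp]: "sigma_sets UNIV (sets borel) = sets (borel :: 'a::topological_space measure)"
  using sets.sigma_sets_eq[of "borel :: 'a measure"] by simp

lemma tm_space[simp]: "space (to_measure m) = UNIV"
  by (simp add: to_measure_def)

lemma tm_sets[simp]: "sets (to_measure m) = sets borel"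
  unfolding to_measure_def by (subst sets_measure_of) auto

lemma tm_meas[simp]: "measurable (to_measure m) N = measurable borel N"
  by (rule measurable_cong_sets) auto

lemma rca_empty: assumes "real_countably_additive m" shows "m {} = 0"
proof -
  have "(\<lambda>i::nat. m {}) sums m (\<Union>i::nat. {})"
    using assms unfolding real_countably_additive_def by (auto simp: disjoint_family_on_def)
  then have "summable (\<lambda>i::nat. m {})" by (rule sums_summable)
  then show ?thesis by (simp add: summable_const_iff)
qed

lemma radon_emeasure:
  assumes r: "radon_pos m" and B: "B \<in> sets borel"
  shows "emeasure (to_measure m) B = ennreal (m B)"
proof -
  have nn: "\<And>B. B \<in> sets borel \<Longrightarrow> 0 \<le> m B" using r by (auto simp: radon_pos_def)
  have rca: "real_countably_additive m" using r by (auto simp: radon_pos_def)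
  have ca: "countably_additive (sets borel) (\<lambda>B. ennreal (m B))"
    unfolding countably_additive_def
  proof (intro allI impI)
    fix A :: "nat \<Rightarrow> 'a set" assume A: "range A \<subseteq> sets borel" "disjoint_family A"
    then have "(\<lambda>i. m (A i)) sums m (\<Union>i. A i)" using rca unfolding real_countably_additive_def by blast
    then show "(\<Sum>i. ennreal (m (A i))) = ennreal (m (\<Union>(range A)))"
      using A nn by (intro suminf_ennreal_eq) auto
  qed
  have pos: "positive (sets borel) (\<lambda>B. ennreal (m B))"
    using rca_empty[OF rca] by (simp add: positive_def)
  show ?thesis unfolding to_measure_def
    using emeasure_measure_of_sigma[OF _ pos ca B] sets.sigma_algebra_axioms[of "borel :: 'a measure"]
    by simp
qed

lemma radon_nonneg: "radon_pos m \<Longrightarrow> 0 \<le> m B"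
  by (cases "B \<in> sets borel") (auto simp: radon_pos_def)

lemma radon_measure: assumes r: "radon_pos m" shows "measure (to_measure m) = m"
proof
  fix B show "measure (to_measure m) B = m B"
  proof (cases "B \<in> sets borel")
    case True then show ?thesis using radon_emeasure[OF r True] radon_nonneg[OF r]
      by (simp add: measure_def)
  next
    case False then show ?thesis using r by (simp add: measure_notin_sets radon_pos_def)
  qed
qed

lemma radon_finite: assumes r: "radon_pos m" shows "finite_measure (to_measure m)"
  by (rule finite_measureI) (simp add: radon_emeasure[OF r])

definition inner_reg :: "'a::topological_space measure \<Rightarrow> bool" where
  "inner_reg N \<longleftrightarrow> (\<forall>B\<in>sets borel. \<forall>e>0. \<exists>C. compact C \<and> C \<subseteq> B \<and> measure N B < measure N C + e)"

lemma radon_inner_reg: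
  fixes m :: "'a::t2_space set \<Rightarrow> real"
  assumes r: "radon_pos m" shows "inner_reg (to_measure m)"
  unfolding inner_reg_def radon_measure[OF r]
proof (intro ballI allI impI)
  fix B :: "'a set" and e :: real assume B: "B \<in> sets borel" and e: "0 < e"
  interpret finite_measure "to_measure m" by (rule radon_finite[OF r])
  have mono: "m C \<le> m B" if "C \<subseteq> B" "compact C" for C
  proof -
    have "C \<in> sets borel" by (simp add: borel_closed compact_imp_closed that(2))
    then have "measure (to_measure m) C \<le> measure (to_measure m) B"
      using that B by (intro finite_measure_mono) auto
    then show ?thesis by (simp add: radon_measure[OF r])
  qed
  have "m B = (SUP C\<in>{C. compact C \<and> C \<subseteq> B}. m C)" using r B by (auto simp: radon_pos_def)
  moreover have "m B - e < m B" using e by simp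
  ultimately have lt: "m B - e < (SUP C\<in>{C. compact C \<and> C \<subseteq> B}. m C)" by simp
  have bdd: "bdd_above (m ` {C. compact C \<and> C \<subseteq> B})"
    by (rule bdd_aboveI[of _ "m B"]) (use mono in blast)
  have ne: "{C. compact C \<and> C \<subseteq> B} \<noteq> {}" by auto
  obtain C where "C \<in> {C. compact C \<and> C \<subseteq> B}" "m B - e < m C"
    using less_cSUP_iff[OF ne bdd, THEN iffD1, OF lt] by blast
  then have "compact C" "C \<subseteq> B" "m B - e < m C" by auto
  then show "\<exists>C. compact C \<and> C \<subseteq> B \<and> m B < m C + e" by (intro exI[of _ C]) auto
qed

definition rad :: "'a::topological_space measure \<Rightarrow> bool" where
  "rad N \<longleftrightarrow> finite_measure N \<and> sets N = sets borel \<and> inner_reg N"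

lemma rad_to_measure: "radon_pos (m :: 'a::t2_space set \<Rightarrow> real) \<Longrightarrow> rad (to_measure m)"
  by (simp add: rad_def radon_finite radon_inner_reg)

lemma rad_space: "rad N \<Longrightarrow> space N = UNIV"
  unfolding rad_def by (metis sets_eq_imp_space_eq space_borel)

lemma rad_radon_pos:
  fixes N :: "'a::t2_space measure"
  assumes R: "rad N" shows "radon_pos (measure N)"
proof -
  interpret finite_measure N using R by (simp add: rad_def)
  have S: "sets N = sets borel" using R by (simp add: rad_def)
  have mono: "measure N C \<le> measure N B" if "C \<subseteq> B" "compact C" "B \<in> sets borel" for B C
  proof -
    have "C \<in> sets borel" by (simp add: borel_closed compact_imp_closed that(2))
    then show ?thesis using that S by (intro finite_measure_mono) auto
  qed
  show ?thesis unfolding radon_pos_def real_countably_additive_def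
  proof (intro conjI allI impI ballI)
    fix B :: "'a set" assume "B \<notin> sets borel" then show "measure N B = 0"
      using S by (simp add: measure_notin_sets)
  next
    fix A :: "nat \<Rightarrow> 'a set" assume "range A \<subseteq> sets borel" "disjoint_family A"
    then show "(\<lambda>i. measure N (A i)) sums measure N (\<Union>(range A))"
      using S by (intro finite_measure_UNION) auto
  next
    fix B :: "'a set" assume B: "B \<in> sets borel"
    have bdd: "bdd_above (measure N ` {C. compact C \<and> C \<subseteq> B})"
      by (rule bdd_aboveI[of _ "measure N B"]) (use mono B in blast)
    show "measure N B = (SUP C\<in>{C. compact C \<and> C \<subseteq> B}. measure N C)"
    proof (rule antisym)
      show "measure N B \<le> (SUP C\<in>{C. compact C \<and> C \<subseteq> B}. measure N C)"
      proof (rule field_le_epsilon)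
        fix e :: real assume "0 < e"
        then obtain C where C: "compact C" "C \<subseteq> B" "measure N B < measure N C + e"
          using R B unfolding rad_def inner_reg_def by blast
        have "measure N C \<le> (SUP C\<in>{C. compact C \<and> C \<subseteq> B}. measure N C)"
          using C bdd by (intro cSUP_upper) blast+
        then show "measure N B \<le> (SUP C\<in>{C. compact C \<and> C \<subseteq> B}. measure N C) + e" using C by simp
      qed
      show "(SUP C\<in>{C. compact C \<and> C \<subseteq> B}. measure N C) \<le> measure N B"
        using mono B by (intro cSUP_least) blast+
    qed
  qed simp
qed

lemma rad_to_measure_measure:
  assumes R: "rad N" shows "to_measure (measure N) = N"
proof -
  interpret finite_measure N using R by (simp add: rad_def)
  have S: "sets N = sets borel" using R by (simp add: rad_def)
  have "to_measure (measure N) = measure_of (space N) (sets N) (emeasure N)"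
    unfolding to_measure_def S rad_space[OF R]
    by (rule measure_of_eq) (auto simp: emeasure_eq_measure S)
  then show ?thesis by (simp add: measure_of_of_measure)
qed

lemma dens_emeasure:
  assumes k: "integrable N k" "\<And>x. 0 \<le> k x" and A: "A \<in> sets N"
  shows "emeasure (density N (\<lambda>x. ennreal (k x))) A = ennreal (\<integral>x. indicator A x * k x \<partial>N)"
proof -
  have km: "k \<in> borel_measurable N" using k by auto
  have "emeasure (density N (\<lambda>x. ennreal (k x))) A = (\<integral>\<^sup>+x. ennreal (k x) * indicator A x \<partial>N)"
    using emeasure_density[OF _ A, of "\<lambda>x. ennreal (k x)"] km by simp
  also have "\<dots> = (\<integral>\<^sup>+x. ennreal (indicator A x * k x) \<partial>N)"
    by (auto intro!: nn_integral_cong split: split_indicator)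
  also have "\<dots> = ennreal (\<integral>x. indicator A x * k x \<partial>N)"
    by (rule nn_integral_eq_integral) (use integrable_mult_indicator[OF A k(1)] k(2) in auto)
  finally show ?thesis .
qed

lemma dens_measure:
  assumes k: "integrable N k" "\<And>x. 0 \<le> k x" and A: "A \<in> sets N"
  shows "measure (density N (\<lambda>x. ennreal (k x))) A = (\<integral>x. indicator A x * k x \<partial>N)"
proof -
  have "0 \<le> (\<integral>x. indicator A x * k x \<partial>N)" using k(2) by (intro integral_nonneg_AE) auto
  then show ?thesis using dens_emeasure[OF k A] by (simp add: measure_def)
qed

lemma dens_finite:
  assumes k: "integrable N k" "\<And>x. 0 \<le> k x"
  shows "finite_measure (density N (\<lambda>x. ennreal (k x)))"
  by (rule finite_measureI) (simp add: dens_emeasure[OF k])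

lemma dens_rad:
  fixes N :: "'a::t2_space measure"
  assumes R: "rad N" and k: "integrable N k" "\<And>x. 0 \<le> k x"
  shows "rad (density N (\<lambda>x. ennreal (k x)))"
proof -
  interpret finite_measure N using R by (simp add: rad_def)
  have S: "sets N = sets borel" using R by (simp add: rad_def)
  let ?Nd = "density N (\<lambda>x. ennreal (k x))"
  interpret Nd: finite_measure ?Nd by (rule dens_finite[OF k])
  have SNd: "sets ?Nd = sets borel" using S by simp
  have "inner_reg ?Nd" unfolding inner_reg_def
  proof (intro ballI allI impI)
    fix B :: "'a set" and e :: real assume B: "B \<in> sets borel" and e: "0 < e"
    have "\<forall>n::nat. \<exists>C. compact C \<and> C \<subseteq> B \<and> measure N B < measure N C + inverse (real (Suc n))"
      using R B unfolding rad_def inner_reg_def by simp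
    then obtain C where C: "\<And>n. compact (C n)" "\<And>n. C n \<subseteq> B"
        "\<And>n. measure N B < measure N (C n) + inverse (real (Suc n))"
      by metis
    define K where "K n = (\<Union>i\<in>{..n}. C i)" for n
    have Kc: "compact (K n)" for n unfolding K_def by (intro compact_UN) (auto simp: C)
    have KB: "K n \<subseteq> B" for n unfolding K_def using C by auto
    have Ks: "K n \<in> sets borel" for n using Kc by (simp add: borel_closed compact_imp_closed)
    have Cs: "C n \<in> sets borel" for n using C by (simp add: borel_closed compact_imp_closed)
    have CK: "C n \<subseteq> K n" for n unfolding K_def by auto
    have small: "measure N (B - K n) < inverse (real (Suc n))" for n
    proof -
      have "measure N (B - K n) \<le> measure N (B - C n)"
        using B Ks Cs S CK[of n] by (intro finite_measure_mono) auto
      also have "\<dots> = measure N B - measure N (C n)"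
        using B Cs S C(2) by (intro finite_measure_Diff) auto
      also have "\<dots> < inverse (real (Suc n))" using C(3)[of n] by simp
      finally show ?thesis .
    qed
    let ?L = "B - (\<Union>n. K n)"
    have Ls: "?L \<in> sets N" using B Ks S by auto
    have Lle: "measure N ?L \<le> inverse (real (Suc n))" for n
    proof -
      have "measure N ?L \<le> measure N (B - K n)"
        using B Ks S by (intro finite_measure_mono) auto
      then show ?thesis using small[of n] by simp
    qed
    have "measure N ?L \<le> 0"
      by (rule LIMSEQ_le_const[OF LIMSEQ_inverse_real_of_nat]) (use Lle in auto)
    then have "measure N ?L = 0" by (simp add: measure_nonneg antisym)
    then have Lnull: "?L \<in> null_sets N" using Ls by (simp add: emeasure_eq_measure null_sets_def)
    define f where "f n x = indicator (B - K n) x * k x" for n x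
    define g where "g x = indicator ?L x * k x" for x
    have km: "k \<in> borel_measurable N" using k by auto
    have conv: "(\<lambda>n. f n x) \<longlonglongrightarrow> g x" for x
    proof (cases "x \<in> (\<Union>n. K n)")
      case True
      then obtain m where m: "x \<in> K m" by auto
      have "eventually (\<lambda>n. f n x = 0) sequentially"
      proof (rule eventually_sequentiallyI[of m])
        fix n assume "m \<le> n"
        then have "K m \<subseteq> K n" unfolding K_def by (auto intro: order_trans)
        then show "f n x = 0" using m by (auto simp: f_def)
      qed
      moreover have "g x = 0" using True by (simp add: g_def)
      ultimately show ?thesis by (simp add: tendsto_eventually)
    next
      case False
      then have "f n x = g x" for n by (auto simp: f_def g_def split: split_indicator)
      then show ?thesis by simp
    qed
    have gint: "integral\<^sup>L N g = 0"
      by (rule integral_eq_zero_AE) (use AE_not_in[OF Lnull] in \<open>auto simp: g_def\<close>)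
    have "(\<lambda>n. integral\<^sup>L N (f n)) \<longlonglongrightarrow> integral\<^sup>L N g"
    proof (rule integral_dominated_convergence[where w = k])
      show "g \<in> borel_measurable N" unfolding g_def using Ls km by measurable
      show "f n \<in> borel_measurable N" for n unfolding f_def using B Ks S km by measurable
      show "integrable N k" by (rule k)
      show "AE x in N. (\<lambda>i. f i x) \<longlonglongrightarrow> g x" using conv by simp
      show "AE x in N. norm (f n x) \<le> k x" for n
        using k(2) by (auto simp: f_def split: split_indicator)
    qed
    then have "eventually (\<lambda>n. integral\<^sup>L N (f n) < e) sequentially"
      using e gint by (intro order_tendstoD) auto
    then obtain n where n: "integral\<^sup>L N (f n) < e" by (auto dest: eventually_happens)
    have "measure ?Nd B = measure ?Nd (K n) + measure ?Nd (B - K n)"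
      using B Ks SNd KB by (subst Nd.finite_measure_Diff) auto
    also have "measure ?Nd (B - K n) = integral\<^sup>L N (f n)"
      unfolding f_def using B Ks S by (intro dens_measure k) auto
    finally have "measure ?Nd B < measure ?Nd (K n) + e" using n by simp
    then show "\<exists>C. compact C \<and> C \<subseteq> B \<and> measure ?Nd B < measure ?Nd C + e"
      using Kc KB by blast
  qed
  then show ?thesis unfolding rad_def using SNd Nd.finite_measure_axioms by simp
qed

definition D :: "'a::topological_space measure \<Rightarrow> ('a \<Rightarrow> real) \<Rightarrow> 'a set \<Rightarrow> real" where
  "D N h B = (if B \<in> sets borel then (\<integral>x. indicator B x * h x \<partial>N) else 0)"

lemma int_ind: "A \<in> sets N \<Longrightarrow> integrable N (f :: 'a \<Rightarrow> real) \<Longrightarrow> integrable N (\<lambda>x. indicator A x * f x)"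
  using integrable_mult_indicator[of A N f] by simp

lemma int_bdd_mult:
  fixes h f :: "'a \<Rightarrow> real"
  assumes h: "integrable N h" and f: "f \<in> borel_measurable N" and c: "\<And>x. \<bar>f x\<bar> \<le> c"
  shows "integrable N (\<lambda>x. h x * f x)"
proof (rule Bochner_Integration.integrable_bound[of N "\<lambda>x. c * \<bar>h x\<bar>"])
  show "integrable N (\<lambda>x. c * \<bar>h x\<bar>)" using h by auto
  show "(\<lambda>x. h x * f x) \<in> borel_measurable N" using h f by auto
  show "AE x in N. norm (h x * f x) \<le> norm (c * \<bar>h x\<bar>)"
  proof (rule AE_I2)
    fix x
    have "\<bar>h x * f x\<bar> = \<bar>h x\<bar> * \<bar>f x\<bar>" by (simp add: abs_mult)
    also have "\<dots> \<le> \<bar>h x\<bar> * \<bar>c\<bar>" using c[of x] by (intro mult_left_mono) auto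
    also have "\<dots> = norm (c * \<bar>h x\<bar>)" by (simp add: abs_mult mult.commute)
    finally show "norm (h x * f x) \<le> norm (c * \<bar>h x\<bar>)" by simp
  qed
qed

lemma int_pos: "integrable N h \<Longrightarrow> integrable N (\<lambda>x. max 0 (h x) :: real)"
  by (intro integrable_max) auto

lemma int_neg: "integrable N h \<Longrightarrow> integrable N (\<lambda>x. max 0 (- h x) :: real)"
  by (intro integrable_max) auto

lemma D_dens:
  assumes S: "sets N = sets borel" and k: "integrable N k" "\<And>x. 0 \<le> k x"
  shows "D N k = measure (density N (\<lambda>x. ennreal (k x)))"
proof
  fix B show "D N k B = measure (density N (\<lambda>x. ennreal (k x))) B"
    using S dens_measure[OF k, of B] by (auto simp: D_def measure_notin_sets)
qed

lemma D_split:
  assumes S: "sets N = sets borel" and h: "integrable N h"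
  shows "D N h = (\<lambda>B. D N (\<lambda>x. max 0 (h x)) B - D N (\<lambda>x. max 0 (- h x)) B)"
proof
  fix B show "D N h B = D N (\<lambda>x. max 0 (h x)) B - D N (\<lambda>x. max 0 (- h x)) B"
  proof (cases "B \<in> sets borel")
    case True
    have "(\<integral>x. indicator B x * max 0 (h x) \<partial>N) - (\<integral>x. indicator B x * max 0 (- h x) \<partial>N)
        = (\<integral>x. indicator B x * max 0 (h x) - indicator B x * max 0 (- h x) \<partial>N)"
      using True S by (intro Bochner_Integration.integral_diff[symmetric] int_ind int_pos int_neg h) auto
    also have "\<dots> = (\<integral>x. indicator B x * h x \<partial>N)"
      by (intro Bochner_Integration.integral_cong) (auto split: split_indicator)
    finally show ?thesis using True by (simp add: D_def)
  qed (simp add: D_def)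
qed

lemma D_MK:
  fixes N :: "'a::t2_space measure"
  assumes R: "rad N" and h: "integrable N h"
  shows "D N h \<in> MK"
proof -
  have S: "sets N = sets borel" using R by (simp add: rad_def)
  have r1: "radon_pos (D N (\<lambda>x. max 0 (h x)))"
    unfolding D_dens[OF S int_pos[OF h] max.cobounded1] by (intro rad_radon_pos dens_rad[OF R] int_pos h) auto
  have r2: "radon_pos (D N (\<lambda>x. max 0 (- h x)))"
    unfolding D_dens[OF S int_neg[OF h] max.cobounded1] by (intro rad_radon_pos dens_rad[OF R] int_neg h) auto
  show ?thesis unfolding MK_def using r1 r2 D_split[OF S h] by blast
qed

lemma D_minus: "(\<lambda>B. - D N h B) = D N (\<lambda>x. - h x)"
  by (auto simp: D_def fun_eq_iff)

lemma pos_var_D: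
  assumes S: "sets N = sets borel" and h: "integrable N h"
  shows "pos_var (D N h) = D N (\<lambda>x. max 0 (h x))"
proof
  fix B :: "'a set"
  show "pos_var (D N h) B = D N (\<lambda>x. max 0 (h x)) B"
  proof (cases "B \<in> sets borel")
    case B: True
    have hm: "h \<in> borel_measurable borel" using h S by (metis borel_measurable_integrable measurable_cong_sets)
    let ?C0 = "B \<inter> {x. 0 < h x}"
    have C0: "?C0 \<in> sets borel" using hm B by measurable
    have le: "D N h C \<le> D N (\<lambda>x. max 0 (h x)) B" if C: "C \<in> sets borel" "C \<subseteq> B" for C
    proof -
      have "D N h C = (\<integral>x. indicator C x * h x \<partial>N)" using C by (simp add: D_def)
      also have "\<dots> \<le> (\<integral>x. indicator B x * max 0 (h x) \<partial>N)"
        using C B S by (intro integral_mono int_ind int_pos h) (auto split: split_indicator)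
      finally show ?thesis using B by (simp add: D_def)
    qed
    have eq: "D N h ?C0 = D N (\<lambda>x. max 0 (h x)) B"
      using C0 B by (simp add: D_def) (rule Bochner_Integration.integral_cong; auto split: split_indicator)
    have "pos_var (D N h) B = Sup (D N h ` {C \<in> sets borel. C \<subseteq> B})"
      using B by (simp add: pos_var_def)
    also have "\<dots> = D N (\<lambda>x. max 0 (h x)) B"
      by (rule cSup_eq_maximum) (use le eq C0 in \<open>auto intro!: image_eqI[where x = ?C0]\<close>)
    finally show ?thesis .
  qed (simp add: D_def pos_var_def)
qed

lemma neg_var_D:
  assumes S: "sets N = sets borel" and h: "integrable N h"
  shows "neg_var (D N h) = D N (\<lambda>x. max 0 (- h x))"
  unfolding neg_var_def D_minus using pos_var_D[OF S integrable_minus[OF h]] by simp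

lemma tot_var_D:
  assumes S: "sets N = sets borel" and h: "integrable N h"
  shows "tot_var (D N h) B = D N (\<lambda>x. \<bar>h x\<bar>) B"
proof (cases "B \<in> sets borel")
  case True
  have "tot_var (D N h) B = (\<integral>x. indicator B x * max 0 (h x) \<partial>N) + (\<integral>x. indicator B x * max 0 (- h x) \<partial>N)"
    using True by (simp add: tot_var_def pos_var_D[OF S h] neg_var_D[OF S h] D_def)
  also have "\<dots> = (\<integral>x. indicator B x * max 0 (h x) + indicator B x * max 0 (- h x) \<partial>N)"
    using True S by (intro Bochner_Integration.integral_add[symmetric] int_ind int_pos int_neg h) auto
  also have "\<dots> = (\<integral>x. indicator B x * \<bar>h x\<bar> \<partial>N)"
    by (intro Bochner_Integration.integral_cong) (auto split: split_indicator)
  finally show ?thesis using True by (simp add: D_def)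
qed (simp add: tot_var_def pos_var_def neg_var_def D_def)

lemma sint_D:
  fixes N :: "'a::t2_space measure"
  assumes R: "rad N" and h: "integrable N h" and f: "f \<in> borel_measurable borel" and c: "\<And>x. \<bar>f x\<bar> \<le> c"
  shows "sint (D N h) f = (\<integral>x. h x * f x \<partial>N)"
proof -
  have S: "sets N = sets borel" using R by (simp add: rad_def)
  have fN: "f \<in> borel_measurable N" using f S by (metis measurable_cong_sets)
  have hm: "h \<in> borel_measurable N" using h by auto
  have tm: "to_measure (D N k) = density N (\<lambda>x. ennreal (k x))" if k: "integrable N k" "\<And>x. 0 \<le> k x" for k
    unfolding D_dens[OF S k] by (rule rad_to_measure_measure[OF dens_rad[OF R k]])
  have i1: "integral\<^sup>L (to_measure (D N (\<lambda>x. max 0 (h x)))) f = (\<integral>x. max 0 (h x) * f x \<partial>N)"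
    unfolding tm[OF int_pos[OF h] max.cobounded1]
    by (subst integral_density) (use fN hm in auto)
  have i2: "integral\<^sup>L (to_measure (D N (\<lambda>x. max 0 (- h x)))) f = (\<integral>x. max 0 (- h x) * f x \<partial>N)"
    unfolding tm[OF int_neg[OF h] max.cobounded1]
    by (subst integral_density) (use fN hm in auto)
  have "sint (D N h) f = (\<integral>x. max 0 (h x) * f x \<partial>N) - (\<integral>x. max 0 (- h x) * f x \<partial>N)"
    unfolding sint_def pos_var_D[OF S h] neg_var_D[OF S h] i1 i2 ..
  also have "\<dots> = (\<integral>x. max 0 (h x) * f x - max 0 (- h x) * f x \<partial>N)"
    by (intro Bochner_Integration.integral_diff[symmetric] int_bdd_mult[OF _ fN c] int_pos int_neg h)
  also have "\<dots> = (\<integral>x. h x * f x \<partial>N)"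
    by (intro Bochner_Integration.integral_cong) (auto simp: max_def algebra_simps)
  finally show ?thesis .
qed

lemma compact_borel: "compact (C :: 'a::t2_space set) \<Longrightarrow> C \<in> sets borel"
  by (simp add: borel_closed compact_imp_closed)

lemma radon_posI:
  fixes m :: "'a::t2_space set \<Rightarrow> real"
  assumes z: "\<And>B. B \<notin> sets borel \<Longrightarrow> m B = 0"
    and nn: "\<And>B. B \<in> sets borel \<Longrightarrow> 0 \<le> m B"
    and ca: "real_countably_additive m"
    and mono: "\<And>B C. C \<subseteq> B \<Longrightarrow> B \<in> sets borel \<Longrightarrow> C \<in> sets borel \<Longrightarrow> m C \<le> m B"
    and inner: "\<And>B e. B \<in> sets borel \<Longrightarrow> 0 < e \<Longrightarrow> \<exists>C. compact C \<and> C \<subseteq> B \<and> m B < m C + e"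
  shows "radon_pos m"
  unfolding radon_pos_def
proof (intro conjI allI impI ballI)
  fix B :: "'a set" assume B: "B \<in> sets borel"
  have bdd: "bdd_above (m ` {C. compact C \<and> C \<subseteq> B})"
    by (rule bdd_aboveI[of _ "m B"]) (use mono B compact_borel in blast)
  show "m B = (SUP C\<in>{C. compact C \<and> C \<subseteq> B}. m C)"
  proof (rule antisym)
    show "m B \<le> (SUP C\<in>{C. compact C \<and> C \<subseteq> B}. m C)"
    proof (rule field_le_epsilon)
      fix e :: real assume "0 < e"
      then obtain C where C: "compact C" "C \<subseteq> B" "m B < m C + e"
        using inner B by blast
      have "m C \<le> (SUP C\<in>{C. compact C \<and> C \<subseteq> B}. m C)"
        using C bdd by (intro cSUP_upper) blast+
      then show "m B \<le> (SUP C\<in>{C. compact C \<and> C \<subseteq> B}. m C) + e" using C by simp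
    qed
    show "(SUP C\<in>{C. compact C \<and> C \<subseteq> B}. m C) \<le> m B"
      using mono B compact_borel by (intro cSUP_least) blast+
  qed
qed (use z nn ca in auto)

lemma radon_mono:
  fixes m :: "'a::topological_space set \<Rightarrow> real"
  assumes r: "radon_pos m" and "C \<subseteq> B" "B \<in> sets borel" "C \<in> sets borel"
  shows "m C \<le> m B"
proof -
  interpret finite_measure "to_measure m" by (rule radon_finite[OF r])
  have "measure (to_measure m) C \<le> measure (to_measure m) B"
    using assms by (intro finite_measure_mono) auto
  then show ?thesis by (simp add: radon_measure[OF r])
qed

lemma radon_z: "radon_pos m \<Longrightarrow> B \<notin> sets borel \<Longrightarrow> m B = 0"
  unfolding radon_pos_def by (elim conjE) blast

lemma radon_ca: "radon_pos m \<Longrightarrow> real_countably_additive m"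
  unfolding radon_pos_def by (elim conjE)

lemma radon_inner:
  fixes m :: "'a::t2_space set \<Rightarrow> real"
  assumes r: "radon_pos m" and B: "B \<in> sets borel" and e: "0 < e"
  shows "\<exists>C. compact C \<and> C \<subseteq> B \<and> m B < m C + e"
  using radon_inner_reg[OF r] B e unfolding inner_reg_def radon_measure[OF r] by blast

lemma radon_add:
  fixes m1 m2 :: "'a::t2_space set \<Rightarrow> real"
  assumes r1: "radon_pos m1" and r2: "radon_pos m2"
  shows "radon_pos (\<lambda>B. m1 B + m2 B)"
proof (rule radon_posI)
  show "real_countably_additive (\<lambda>B. m1 B + m2 B)"
    unfolding real_countably_additive_def
  proof (intro allI impI)
    fix A :: "nat \<Rightarrow> 'a set" assume "range A \<subseteq> sets borel" "disjoint_family A"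
    then have "(\<lambda>i. m1 (A i)) sums m1 (\<Union>(range A))" "(\<lambda>i. m2 (A i)) sums m2 (\<Union>(range A))"
      using radon_ca[OF r1] radon_ca[OF r2] unfolding real_countably_additive_def by simp_all
    then show "(\<lambda>i. m1 (A i) + m2 (A i)) sums (m1 (\<Union>(range A)) + m2 (\<Union>(range A)))" by (rule sums_add)
  qed
  show "m1 C + m2 C \<le> m1 B + m2 B" if "C \<subseteq> B" "B \<in> sets borel" "C \<in> sets borel" for B C
    using radon_mono[OF r1 that] radon_mono[OF r2 that] by simp
  show "\<exists>C. compact C \<and> C \<subseteq> B \<and> m1 B + m2 B < m1 C + m2 C + e" if B: "B \<in> sets borel" and e: "0 < e" for B e
  proof -
    obtain C1 where C1: "compact C1" "C1 \<subseteq> B" "m1 B < m1 C1 + e/2" using radon_inner[OF r1 B half_gt_zero[OF e]] by blast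
    obtain C2 where C2: "compact C2" "C2 \<subseteq> B" "m2 B < m2 C2 + e/2" using radon_inner[OF r2 B half_gt_zero[OF e]] by blast
    have "m1 C1 \<le> m1 (C1 \<union> C2)" using C1 C2 by (intro radon_mono[OF r1]) (auto intro: compact_borel)
    moreover have "m2 C2 \<le> m2 (C1 \<union> C2)" using C1 C2 by (intro radon_mono[OF r2]) (auto intro: compact_borel)
    ultimately show ?thesis using C1 C2 by (intro exI[of _ "C1 \<union> C2"]) auto
  qed
qed (simp_all add: radon_z[OF r1] radon_z[OF r2] radon_nonneg[OF r1] radon_nonneg[OF r2])

lemma radon_zero: "radon_pos (\<lambda>B::'a::t2_space set. 0)"
proof (rule radon_posI)
  show "real_countably_additive (\<lambda>B::'a set. 0)" by (simp add: real_countably_additive_def)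
  show "\<exists>C. compact C \<and> C \<subseteq> B \<and> (0::real) < 0 + e" if "0 < e" for B and e :: real
    using that by (intro exI[of _ "{}"]) simp
qed simp_all

lemma radon_scale:
  fixes m :: "'a::t2_space set \<Rightarrow> real"
  assumes r: "radon_pos m" and c: "0 \<le> c"
  shows "radon_pos (\<lambda>B. c * m B)"
proof (cases "c = 0")
  case True then show ?thesis using radon_zero by simp
next
  case False
  then have c': "0 < c" using c by simp
  show ?thesis
  proof (rule radon_posI)
    show "real_countably_additive (\<lambda>B. c * m B)"
      unfolding real_countably_additive_def
    proof (intro allI impI)
      fix A :: "nat \<Rightarrow> 'a set" assume "range A \<subseteq> sets borel" "disjoint_family A"
      then have "(\<lambda>i. m (A i)) sums m (\<Union>(range A))"
        using radon_ca[OF r] unfolding real_countably_additive_def by simp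
      then show "(\<lambda>i. c * m (A i)) sums (c * m (\<Union>(range A)))" by (rule sums_mult)
    qed
    show "c * m C \<le> c * m B" if "C \<subseteq> B" "B \<in> sets borel" "C \<in> sets borel" for B C
      using radon_mono[OF r that] c by (rule mult_left_mono)
    show "\<exists>C. compact C \<and> C \<subseteq> B \<and> c * m B < c * m C + e" if B: "B \<in> sets borel" and e: "0 < e" for B e
    proof -
      obtain C where C: "compact C" "C \<subseteq> B" "m B < m C + e / c" using radon_inner[OF r B divide_pos_pos[OF e c']] by blast
      have "c * m B < c * (m C + e / c)" using C(3) c' by (rule mult_strict_left_mono)
      also have "\<dots> = c * m C + e" using c' by (simp add: distrib_left)
      finally show ?thesis using C by blast
    qed
  qed (simp_all add: radon_z[OF r] radon_nonneg[OF r] c)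
qed

lemma radon_sum:
  fixes m :: "'b \<Rightarrow> 'a::t2_space set \<Rightarrow> real"
  assumes "finite F" "\<And>t. t \<in> F \<Longrightarrow> radon_pos (m t)"
  shows "radon_pos (\<lambda>B. \<Sum>t\<in>F. m t B)"
  using assms by (induction F rule: finite_induct) (auto intro: radon_zero radon_add)

lemma dirac_radon: "radon_pos (dirac (t :: 'a::t2_space))"
proof (rule radon_posI)
  show "real_countably_additive (dirac t)" unfolding real_countably_additive_def
  proof (intro allI impI)
    fix A :: "nat \<Rightarrow> 'a set" assume A: "range A \<subseteq> sets borel" "disjoint_family A"
    then have U: "(\<Union>(range A)) \<in> sets borel" by auto
    show "(\<lambda>i. dirac t (A i)) sums dirac t (\<Union>(range A))"
    proof (cases "\<exists>j. t \<in> A j")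
      case True
      then obtain j where j: "t \<in> A j" by auto
      have "dirac t (A i) = (if i = j then 1 else 0)" for i
        using A j by (auto simp: dirac_def disjoint_family_on_def)
      moreover have "dirac t (\<Union>(range A)) = 1" using U j by (auto simp: dirac_def)
      ultimately show ?thesis using sums_single[of j "\<lambda>_. 1::real"] by simp
    next
      case False
      then show ?thesis using U by (simp add: dirac_def)
    qed
  qed
  show "\<exists>C. compact C \<and> C \<subseteq> B \<and> dirac t B < dirac t C + e" if "B \<in> sets borel" "0 < e" for B e
  proof (cases "t \<in> B")
    case True then show ?thesis using that
      by (intro exI[of _ "{t}"]) (auto simp: dirac_def compact_borel)
  next
    case False then show ?thesis using that by (intro exI[of _ "{}"]) (auto simp: dirac_def)
  qed
qed (auto simp: dirac_def)

lemma dsum_MK: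
  fixes c :: "'a::t2_space \<Rightarrow> real"
  assumes F: "finite F"
  shows "(\<lambda>B. \<Sum>t\<in>F. c t * dirac t B) \<in> MK"
proof -
  have r1: "radon_pos (\<lambda>B. \<Sum>t\<in>F. max 0 (c t) * dirac t B)"
    using F by (intro radon_sum radon_scale dirac_radon) auto
  have r2: "radon_pos (\<lambda>B. \<Sum>t\<in>F. max 0 (- c t) * dirac t B)"
    using F by (intro radon_sum radon_scale dirac_radon) auto
  have "(\<lambda>B. \<Sum>t\<in>F. c t * dirac t B) = (\<lambda>B. (\<Sum>t\<in>F. max 0 (c t) * dirac t B) - (\<Sum>t\<in>F. max 0 (- c t) * dirac t B))"
    by (auto simp: fun_eq_iff sum_subtractf[symmetric] intro!: sum.cong simp: max_def algebra_simps)
  then show ?thesis unfolding MK_def using r1 r2 by blast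
qed

lemma span_MK: "span_Delta \<subseteq> (MK :: ('a::t2_space set \<Rightarrow> real) set)"
  unfolding span_Delta_def using dsum_MK by blast

lemma dsum_pos:
  fixes c :: "'a::t2_space \<Rightarrow> real"
  assumes F: "finite F" and c: "\<And>t. t \<in> F \<Longrightarrow> 0 \<le> c t"
  shows "(\<lambda>B. \<Sum>t\<in>F. c t * dirac t B) \<in> MK_pos \<inter> span_Delta"
  using dsum_MK[OF F, of c] F c unfolding MK_pos_def span_Delta_def
  by (auto intro!: sum_nonneg simp: dirac_def)

lemma co_pos: "co_Delta \<subseteq> (MK_pos :: ('a::t2_space set \<Rightarrow> real) set)"
  unfolding co_Delta_def using dsum_pos by blast

lemma D_diff:
  assumes S: "sets N = sets borel" and h1: "integrable N h1" and h2: "integrable N h2"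
  shows "(\<lambda>B. D N h1 B - D N h2 B) = D N (\<lambda>x. h1 x - h2 x)"
proof
  fix B show "D N h1 B - D N h2 B = D N (\<lambda>x. h1 x - h2 x) B"
  proof (cases "B \<in> sets borel")
    case True
    have "(\<integral>x. indicator B x * h1 x \<partial>N) - (\<integral>x. indicator B x * h2 x \<partial>N)
        = (\<integral>x. indicator B x * h1 x - indicator B x * h2 x \<partial>N)"
      using True S by (intro Bochner_Integration.integral_diff[symmetric] int_ind h1 h2) auto
    also have "\<dots> = (\<integral>x. indicator B x * (h1 x - h2 x) \<partial>N)"
      by (simp add: algebra_simps)
    finally show ?thesis using True by (simp add: D_def)
  qed (simp add: D_def)
qed

lemma RN_rep:
  fixes N :: "'a::t2_space measure"
  assumes R: "rad N" and r: "radon_pos m" and le: "\<And>B. m B \<le> measure N B"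
  shows "\<exists>k. integrable N k \<and> (\<forall>x. 0 \<le> k x) \<and> m = D N k"
proof -
  interpret finite_measure N using R by (simp add: rad_def)
  have S: "sets N = sets borel" using R by (simp add: rad_def)
  let ?M = "to_measure m"
  interpret M: finite_measure ?M by (rule radon_finite[OF r])
  have SM: "sets ?M = sets N" using S by simp
  have ac: "absolutely_continuous N ?M"
    unfolding absolutely_continuous_def
  proof
    fix A assume A: "A \<in> null_sets N"
    then have As: "A \<in> sets borel" using S by auto
    have "measure N A = 0" using A by (simp add: measure_def null_setsD1)
    then have "m A \<le> 0" using le[of A] by simp
    then have "m A = 0" using radon_nonneg[OF r, of A] by simp
    then show "A \<in> null_sets ?M" using As radon_emeasure[OF r As] by (intro null_setsI) auto
  qed
  obtain k where k: "k \<in> borel_measurable N" "AE x in N. RN_deriv N ?M x = ennreal (k x)" "\<And>x. 0 \<le> k x"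
    using real_RN_deriv[OF M.finite_measure_axioms ac SM] by blast
  have dRN: "density N (RN_deriv N ?M) = ?M"
    by (rule density_RN_deriv[OF ac SM])
  have "density N (\<lambda>x. ennreal (k x)) = density N (RN_deriv N ?M)"
  proof (rule density_cong)
    show "(\<lambda>x. ennreal (k x)) \<in> borel_measurable N" using k(1) by simp
    show "RN_deriv N ?M \<in> borel_measurable N" by simp
    show "AE x in N. ennreal (k x) = RN_deriv N ?M x" using k(2) by (simp add: eq_commute)
  qed
  then have dk: "density N (\<lambda>x. ennreal (k x)) = ?M" using dRN by simp
  have "(\<integral>\<^sup>+x. ennreal (k x) \<partial>N) = emeasure (density N (\<lambda>x. ennreal (k x))) (space N)"
    using k by (simp add: emeasure_density)
  also have "\<dots> < \<infinity>" using dk by (simp add: M.emeasure_real less_top[symmetric])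
  finally have ki: "integrable N k" using k by (intro integrableI_nonneg) auto
  have "m = measure ?M" using radon_measure[OF r] by simp
  also have "\<dots> = D N k" using D_dens[OF S ki k(3)] dk by simp
  finally show ?thesis using ki k(3) by blast
qed

lemma MK_rep2:
  fixes \<nu> \<mu> :: "'a::t2_space set \<Rightarrow> real"
  assumes "\<nu> \<in> MK" "\<mu> \<in> MK"
  shows "\<exists>N h s. rad N \<and> integrable N h \<and> integrable N s \<and> \<nu> = D N h \<and> \<mu> = D N s"
proof -
  obtain m1 m2 where m12: "radon_pos m1" "radon_pos m2" "\<nu> = (\<lambda>B. m1 B - m2 B)" using assms(1) by (auto simp: MK_def)
  obtain m3 m4 where m34: "radon_pos m3" "radon_pos m4" "\<mu> = (\<lambda>B. m3 B - m4 B)" using assms(2) by (auto simp: MK_def)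
  define l where "l = (\<lambda>B. m1 B + m2 B + (m3 B + m4 B))"
  have rl: "radon_pos l" unfolding l_def using m12 m34 by (intro radon_add) auto
  define N where "N = to_measure l"
  have R: "rad N" unfolding N_def by (rule rad_to_measure[OF rl])
  have S: "sets N = sets borel" using R by (simp add: rad_def)
  have mN: "measure N = l" unfolding N_def by (rule radon_measure[OF rl])
  have n1: "radon_pos m1" "radon_pos m2" "radon_pos m3" "radon_pos m4" using m12 m34 by auto
  have nn: "0 \<le> m1 B" "0 \<le> m2 B" "0 \<le> m3 B" "0 \<le> m4 B" for B
    using radon_nonneg[OF n1(1)] radon_nonneg[OF n1(2)] radon_nonneg[OF n1(3)] radon_nonneg[OF n1(4)] by auto
  have le1: "m1 B \<le> measure N B" for B using nn[of B] by (simp add: mN l_def)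
  obtain k1 where k1: "integrable N k1" "m1 = D N k1"
    using RN_rep[OF R n1(1) le1] by blast
  have le2: "m2 B \<le> measure N B" for B using nn[of B] by (simp add: mN l_def)
  obtain k2 where k2: "integrable N k2" "m2 = D N k2"
    using RN_rep[OF R n1(2) le2] by blast
  have le3: "m3 B \<le> measure N B" for B using nn[of B] by (simp add: mN l_def)
  obtain k3 where k3: "integrable N k3" "m3 = D N k3"
    using RN_rep[OF R n1(3) le3] by blast
  have le4: "m4 B \<le> measure N B" for B using nn[of B] by (simp add: mN l_def)
  obtain k4 where k4: "integrable N k4" "m4 = D N k4"
    using RN_rep[OF R n1(4) le4] by blast
  have "\<nu> = D N (\<lambda>x. k1 x - k2 x)" unfolding m12(3) k1(2) k2(2) D_diff[OF S k1(1) k2(1)] ..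
  moreover have "\<mu> = D N (\<lambda>x. k3 x - k4 x)" unfolding m34(3) k3(2) k4(2) D_diff[OF S k3(1) k4(1)] ..
  moreover have "integrable N (\<lambda>x. k1 x - k2 x)" using k1(1) k2(1) by (rule Bochner_Integration.integrable_diff)
  moreover have "integrable N (\<lambda>x. k3 x - k4 x)" using k3(1) k4(1) by (rule Bochner_Integration.integrable_diff)
  ultimately show ?thesis using R by blast
qed

lemma D_zero_AE:
  assumes S: "sets N = sets borel" and h: "integrable N h" and Ss: "A \<in> sets borel"
    and z: "\<And>E. E \<in> sets borel \<Longrightarrow> E \<subseteq> A \<Longrightarrow> D N h E = 0"
  shows "AE x in N. x \<in> A \<longrightarrow> h x = 0"
proof -
  have hm: "h \<in> borel_measurable borel" using h S by (metis borel_measurable_integrable measurable_cong_sets)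
  let ?E1 = "A \<inter> {x. 0 < h x}" and ?E2 = "A \<inter> {x. h x < 0}"
  have E1: "?E1 \<in> sets borel" using hm Ss by measurable
  have E2: "?E2 \<in> sets borel" using hm Ss by measurable
  have "(\<integral>x. indicator ?E1 x * h x \<partial>N) = 0" using z[OF E1] E1 by (simp add: D_def)
  then have a1: "AE x in N. indicator ?E1 x * h x = 0"
    using E1 S by (subst integral_nonneg_eq_0_iff_AE[symmetric]) (auto intro!: int_ind h split: split_indicator)
  have "(\<integral>x. indicator ?E2 x * h x \<partial>N) = 0" using z[OF E2] E2 by (simp add: D_def)
  then have "(\<integral>x. - (indicator ?E2 x * h x) \<partial>N) = 0" by simp
  then have a2: "AE x in N. - (indicator ?E2 x * h x) = 0"
    using E2 S by (subst integral_nonneg_eq_0_iff_AE[symmetric]) (auto intro!: int_ind h split: split_indicator)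
  from a1 a2 show ?thesis
  proof eventually_elim
    case (elim x)
    show ?case
    proof
      assume x: "x \<in> A"
      show "h x = 0"
      proof (rule ccontr)
        assume "h x \<noteq> 0"
        then have "0 < h x \<or> h x < 0" by linarith
        then show False using elim x by (auto simp: indicator_def)
      qed
    qed
  qed
qed

lemma D_nonneg_AE:
  assumes S: "sets N = sets borel" and h: "integrable N h" and nn: "\<And>B. 0 \<le> D N h B"
  shows "AE x in N. 0 \<le> h x"
proof -
  have hm: "h \<in> borel_measurable borel" using h S by (metis borel_measurable_integrable measurable_cong_sets)
  let ?E = "{x. h x < 0}"
  have E: "?E \<in> sets borel" using hm by measurable
  have "0 \<le> (\<integral>x. indicator ?E x * h x \<partial>N)" using nn[of ?E] E by (simp add: D_def)
  moreover have "0 \<le> (\<integral>x. - (indicator ?E x * h x) \<partial>N)"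
    by (rule integral_nonneg_AE) (auto split: split_indicator)
  ultimately have "(\<integral>x. - (indicator ?E x * h x) \<partial>N) = 0" by simp
  then have "AE x in N. - (indicator ?E x * h x) = 0"
    using E S by (subst integral_nonneg_eq_0_iff_AE[symmetric]) (auto intro!: int_ind h split: split_indicator)
  then show ?thesis
  proof eventually_elim
    case (elim x)
    then show ?case by (cases "h x < 0") (auto simp: indicator_def)
  qed
qed

lemma H: "Hausdorff_space (euclidean :: 'a::t2_space topology)"
    unfolding Hausdorff_space_def
  proof (intro allI impI)
    fix x y :: 'a assume "x \<in> topspace euclidean \<and> y \<in> topspace euclidean \<and> x \<noteq> y"
    then obtain U V where "open U" "open V" "x \<in> U" "y \<in> V" "U \<inter> V = {}"
      using hausdorff[of x y] by blast
    then show "\<exists>U V. openin euclidean U \<and> openin euclidean V \<and> x \<in> U \<and> y \<in> V \<and> disjnt U V"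
      by (auto simp: disjnt_def)
  qed

lemma urysohn_01:
  fixes C D :: "'a::t2_space set"
  assumes K: "compact (UNIV :: 'a set)" and C: "closed C" and D: "closed D" and dj: "C \<inter> D = {}"
  shows "\<exists>g::'a \<Rightarrow> real. continuous_on UNIV g \<and> (\<forall>x. 0 \<le> g x \<and> g x \<le> 1) \<and> (\<forall>x\<in>C. g x = 1) \<and> (\<forall>x\<in>D. g x = 0)"
proof -
  have "compact_space (euclidean :: 'a topology)"
    using K by (simp add: compact_space_def compactin_euclidean_iff)
  then have ns: "normal_space (euclidean :: 'a topology)"
    using H compact_Hausdorff_or_regular_imp_normal_space by blast
  have cD: "closedin euclidean D" using closed_closedin[THEN iffD1, OF D] .
  have cC: "closedin euclidean C" using closed_closedin[THEN iffD1, OF C] .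
  have dj': "disjnt D C" using dj by (auto simp: disjnt_def)
  obtain f where f: "continuous_map euclidean (top_of_set {0..1::real}) f" "f ` D \<subseteq> {0}" "f ` C \<subseteq> {1}"
    by (rule Urysohn_lemma[OF ns cD cC dj' zero_le_one])
  have "continuous_map euclidean euclidean f" "f ` UNIV \<subseteq> {0..1}"
    using f(1) continuous_map_in_subtopology[of euclidean euclidean "{0..1::real}" f] by auto
  then have "continuous_on UNIV f" "\<forall>x. 0 \<le> f x \<and> f x \<le> 1"
    by (auto simp: continuous_map_iff_continuous2 image_subset_iff)
  moreover have "\<forall>x\<in>C. f x = 1" "\<forall>x\<in>D. f x = 0" using f(2,3) by auto
  ultimately show ?thesis by blast
qed

lemma cont_bdd:
  fixes g :: "'a::topological_space \<Rightarrow> real"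
  assumes K: "compact (UNIV :: 'a set)" and g: "continuous_on UNIV g"
  shows "\<exists>c. \<forall>x. \<bar>g x\<bar> \<le> c"
proof -
  have "compact (range g)" using compact_continuous_image[OF g K] by simp
  then have "bounded (range g)" by (rule compact_imp_bounded)
  then obtain c where "\<forall>y\<in>range g. norm y \<le> c" by (auto simp: bounded_iff)
  then show ?thesis by auto
qed

lemma cont_int:
  fixes g :: "'a::topological_space \<Rightarrow> real"
  assumes K: "compact (UNIV :: 'a set)" and F: "finite_measure N" and S: "sets N = sets borel"
    and g: "continuous_on UNIV g"
  shows "integrable N g"
proof -
  obtain c where c: "\<And>x. \<bar>g x\<bar> \<le> c" using cont_bdd[OF K g] by blast
  have "g \<in> borel_measurable N" using borel_measurable_continuous_onI[OF g]
    measurable_cong_sets[OF S refl, of "borel :: real measure"] by simp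
  then show ?thesis using c by (intro finite_measure.integrable_const_bound[OF F, of _ c]) auto
qed

lemma ind_approx:
  fixes N :: "'a::t2_space measure" and e :: real
  assumes K: "compact (UNIV :: 'a set)" and R: "rad N" and A: "A \<in> sets borel" and e: "0 < e"
  shows "\<exists>g::'a \<Rightarrow> real. continuous_on UNIV g \<and> (\<forall>x. 0 \<le> g x \<and> g x \<le> 1) \<and> (\<integral>x. \<bar>g x - indicator A x\<bar> \<partial>N) < e"
proof -
  interpret finite_measure N using R by (simp add: rad_def)
  have S: "sets N = sets borel" using R by (simp add: rad_def)
  obtain C where C: "compact C" "C \<subseteq> A" "measure N A < measure N C + e/2"
    using R A half_gt_zero[OF e] unfolding rad_def inner_reg_def by blast
  have A': "- A \<in> sets borel" using A by auto
  obtain D where D: "compact D" "D \<subseteq> - A" "measure N (- A) < measure N D + e/2"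
    using R A' half_gt_zero[OF e] unfolding rad_def inner_reg_def by blast
  have Cs: "C \<in> sets borel" and Ds: "D \<in> sets borel" using C D by (auto intro: compact_borel)
  obtain g :: "'a \<Rightarrow> real" where g: "continuous_on UNIV g" "\<forall>x. 0 \<le> g x \<and> g x \<le> 1" "\<forall>x\<in>C. g x = 1" "\<forall>x\<in>D. g x = 0"
  proof -
    have "C \<inter> D = {}" using C(2) D(2) by blast
    then show ?thesis using urysohn_01[OF K compact_imp_closed[OF C(1)] compact_imp_closed[OF D(1)]] that by blast
  qed
  have gi: "integrable N g" by (rule cont_int[OF K finite_measure_axioms S g(1)])
  have bnd: "\<bar>g x - indicator A x\<bar> \<le> indicator (A - C) x + indicator (- A - D) x" for x
  proof -
    have g01: "0 \<le> g x" "g x \<le> 1" using g(2) by auto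
    show ?thesis
    proof (cases "x \<in> C")
      case True
      then have "x \<in> A" "g x = 1" using C(2) g(3) by auto
      then show ?thesis by (simp add: indicator_def)
    next
      case nC: False
      show ?thesis
      proof (cases "x \<in> D")
        case True
        then have "x \<notin> A" "g x = 0" using D(2) g(4) by auto
        then show ?thesis by (simp add: indicator_def)
      next
        case nD: False
        show ?thesis
        proof (cases "x \<in> A")
          case True then show ?thesis using nC g01 by (simp add: indicator_def)
        next
          case False then show ?thesis using nD g01 by (simp add: indicator_def)
        qed
      qed
    qed
  qed
  have m1: "measure N (A - C) = measure N A - measure N C"
    using A Cs C(2) S by (intro finite_measure_Diff) auto
  have m2: "measure N (- A - D) = measure N (- A) - measure N D"
    using A' Ds D(2) S by (intro finite_measure_Diff) auto
  have i1: "integrable N (\<lambda>x. indicator (A - C) x :: real)"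
    using A Cs S by (intro integrable_real_indicator) (auto simp: emeasure_eq_measure)
  have i2: "integrable N (\<lambda>x. indicator (- A - D) x :: real)"
    using A' Ds S by (intro integrable_real_indicator) (auto simp: emeasure_eq_measure)
  have i3: "integrable N (\<lambda>x. \<bar>g x - indicator A x\<bar>)"
    using A S gi by (intro integrable_abs Bochner_Integration.integrable_diff integrable_real_indicator)
      (auto simp: emeasure_eq_measure)
  have "(\<integral>x. \<bar>g x - indicator A x\<bar> \<partial>N) \<le> (\<integral>x. indicator (A - C) x + indicator (- A - D) x \<partial>N)"
    by (rule integral_mono[OF i3 Bochner_Integration.integrable_add[OF i1 i2] bnd])
  also have "\<dots> = measure N (A - C) + measure N (- A - D)"
    using A Cs A' Ds S by (subst Bochner_Integration.integral_add[OF i1 i2]) simp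
  also have "\<dots> < e" using m1 m2 C(3) D(3) by simp
  finally show ?thesis using g by blast
qed

lemma L1_tri:
  fixes a b c :: "'a \<Rightarrow> real"
  assumes a: "integrable N a" and b: "integrable N b" and c: "integrable N c"
  shows "(\<integral>x. \<bar>a x - c x\<bar> \<partial>N) \<le> (\<integral>x. \<bar>a x - b x\<bar> \<partial>N) + (\<integral>x. \<bar>b x - c x\<bar> \<partial>N)"
proof -
  have i1: "integrable N (\<lambda>x. \<bar>a x - b x\<bar>)" using a b by auto
  have i2: "integrable N (\<lambda>x. \<bar>b x - c x\<bar>)" using b c by auto
  have i3: "integrable N (\<lambda>x. \<bar>a x - c x\<bar>)" using a c by auto
  have "(\<integral>x. \<bar>a x - c x\<bar> \<partial>N) \<le> (\<integral>x. \<bar>a x - b x\<bar> + \<bar>b x - c x\<bar> \<partial>N)"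
    by (rule integral_mono[OF i3 Bochner_Integration.integrable_add[OF i1 i2]]) simp
  also have "\<dots> = (\<integral>x. \<bar>a x - b x\<bar> \<partial>N) + (\<integral>x. \<bar>b x - c x\<bar> \<partial>N)"
    by (rule Bochner_Integration.integral_add[OF i1 i2])
  finally show ?thesis .
qed

lemma cont_approx:
  fixes N :: "'a::t2_space measure" and f :: "'a \<Rightarrow> real"
  assumes K: "compact (UNIV :: 'a set)" and R: "rad N" and f: "integrable N f"
  shows "\<forall>e>0. \<exists>g. continuous_on UNIV g \<and> (\<integral>x. \<bar>g x - f x\<bar> \<partial>N) < e"
proof -
  have S: "sets N = sets borel" using R by (simp add: rad_def)
  have F: "finite_measure N" using R by (simp add: rad_def)
  have ci: "integrable N g" if "continuous_on UNIV g" for g :: "'a \<Rightarrow> real"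
    by (rule cont_int[OF K F S that])
  from f show ?thesis
  proof (induct rule: integrable_induct)
    case (base A c)
    show ?case
    proof (intro allI impI)
      fix e :: real assume e: "0 < e"
      have As: "A \<in> sets borel" using base S by simp
      have e': "0 < e / (\<bar>c\<bar> + 1)" using e by simp
      obtain g :: "'a \<Rightarrow> real" where g: "continuous_on UNIV g" "(\<integral>x. \<bar>g x - indicator A x\<bar> \<partial>N) < e / (\<bar>c\<bar> + 1)"
        using ind_approx[OF K R As e'] by blast
      have "(\<integral>x. \<bar>g x * c - indicator A x *\<^sub>R c\<bar> \<partial>N) = (\<integral>x. \<bar>c\<bar> * \<bar>g x - indicator A x\<bar> \<partial>N)"
        by (intro Bochner_Integration.integral_cong) (auto simp: abs_mult[symmetric] right_diff_distrib mult.commute)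
      also have "\<dots> = \<bar>c\<bar> * (\<integral>x. \<bar>g x - indicator A x\<bar> \<partial>N)" by simp
      also have "\<dots> \<le> \<bar>c\<bar> * (e / (\<bar>c\<bar> + 1))" using g(2) by (intro mult_left_mono) auto
      also have "\<dots> < e"
      proof -
        have "\<bar>c\<bar> * (e / (\<bar>c\<bar> + 1)) = e * (\<bar>c\<bar> / (\<bar>c\<bar> + 1))" by simp
        also have "\<dots> < e * 1" using e by (intro mult_strict_left_mono) auto
        finally show ?thesis by simp
      qed
      finally have "(\<integral>x. \<bar>g x * c - indicator A x *\<^sub>R c\<bar> \<partial>N) < e" .
      moreover have "continuous_on UNIV (\<lambda>x. g x * c)" using g(1) by (intro continuous_intros)
      ultimately show "\<exists>g. continuous_on UNIV g \<and> (\<integral>x. \<bar>g x - indicator A x *\<^sub>R c\<bar> \<partial>N) < e" by blast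
    qed
  next
    case (add f1 f2)
    show ?case
    proof (intro allI impI)
      fix e :: real assume e: "0 < e"
      obtain g1 where g1: "continuous_on UNIV g1" "(\<integral>x. \<bar>g1 x - f1 x\<bar> \<partial>N) < e/2"
        using add(2) half_gt_zero[OF e] by blast
      obtain g2 where g2: "continuous_on UNIV g2" "(\<integral>x. \<bar>g2 x - f2 x\<bar> \<partial>N) < e/2"
        using add(4) half_gt_zero[OF e] by blast
      have "(\<integral>x. \<bar>(g1 x + g2 x) - (f1 x + f2 x)\<bar> \<partial>N) \<le> (\<integral>x. \<bar>g1 x - f1 x\<bar> + \<bar>g2 x - f2 x\<bar> \<partial>N)"
        using ci[OF g1(1)] ci[OF g2(1)] add(1,3)
        by (intro integral_mono) auto
      also have "\<dots> = (\<integral>x. \<bar>g1 x - f1 x\<bar> \<partial>N) + (\<integral>x. \<bar>g2 x - f2 x\<bar> \<partial>N)"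
        using ci[OF g1(1)] ci[OF g2(1)] add(1,3)
        by (intro Bochner_Integration.integral_add) auto
      also have "\<dots> < e" using g1 g2 by simp
      finally show "\<exists>g. continuous_on UNIV g \<and> (\<integral>x. \<bar>g x - (f1 x + f2 x)\<bar> \<partial>N) < e"
        using g1(1) g2(1) by (intro exI[of _ "\<lambda>x. g1 x + g2 x"]) (auto intro: continuous_intros)
    qed
  next
    case (lim f s)
    show ?case
    proof (intro allI impI)
      fix e :: real assume e: "0 < e"
      have "(\<lambda>i. \<integral>x. \<bar>s i x - f x\<bar> \<partial>N) \<longlonglongrightarrow> (\<integral>x. 0 \<partial>N)"
      proof (rule integral_dominated_convergence[where w = "\<lambda>x. 3 * \<bar>f x\<bar>"])
        show "(\<lambda>x. 0::real) \<in> borel_measurable N" by simp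
        show "(\<lambda>x. \<bar>s i x - f x\<bar>) \<in> borel_measurable N" for i using lim(1)[of i] lim(5) by auto
        show "integrable N (\<lambda>x. 3 * \<bar>f x\<bar>)" using lim(5) by auto
        show "AE x in N. (\<lambda>i. \<bar>s i x - f x\<bar>) \<longlonglongrightarrow> 0"
        proof (rule AE_I2)
          fix x assume "x \<in> space N"
          then have "(\<lambda>i. s i x - f x) \<longlonglongrightarrow> f x - f x" using lim(3) by (intro tendsto_diff) auto
          then have "(\<lambda>i. \<bar>s i x - f x\<bar>) \<longlonglongrightarrow> \<bar>f x - f x\<bar>" by (rule tendsto_rabs)
          then show "(\<lambda>i. \<bar>s i x - f x\<bar>) \<longlonglongrightarrow> 0" by simp
        qed
        show "AE x in N. norm \<bar>s i x - f x\<bar> \<le> 3 * \<bar>f x\<bar>" for i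
        proof (rule AE_I2)
          fix x assume x: "x \<in> space N"
          have "\<bar>s i x\<bar> \<le> 2 * \<bar>f x\<bar>" using lim(4)[OF x, of i] by simp
          then show "norm \<bar>s i x - f x\<bar> \<le> 3 * \<bar>f x\<bar>" by simp
        qed
      qed
      then have "eventually (\<lambda>i. (\<integral>x. \<bar>s i x - f x\<bar> \<partial>N) < e/2) sequentially"
        using e by (intro order_tendstoD) auto
      then obtain i where i: "(\<integral>x. \<bar>s i x - f x\<bar> \<partial>N) < e/2" by (auto dest: eventually_happens)
      obtain g where g: "continuous_on UNIV g" "(\<integral>x. \<bar>g x - s i x\<bar> \<partial>N) < e/2"
        using lim(2)[of i] half_gt_zero[OF e] by blast
      have "(\<integral>x. \<bar>g x - f x\<bar> \<partial>N) \<le> (\<integral>x. \<bar>g x - s i x\<bar> \<partial>N) + (\<integral>x. \<bar>s i x - f x\<bar> \<partial>N)"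
        by (rule L1_tri[OF ci[OF g(1)] lim(1) lim(5)])
      also have "\<dots> < e" using g(2) i by simp
      finally show "\<exists>g. continuous_on UNIV g \<and> (\<integral>x. \<bar>g x - f x\<bar> \<partial>N) < e" using g(1) by blast
    qed
  qed
qed

lemma Seq_unfold:
  assumes wo: "Well_order r"
  shows "Seq r i A = (if Order_Relation.underS r i = {} then A
            else if (\<exists>j. imm_pred r j i) then seq_cl (Seq r (SOME j. imm_pred r j i) A)
            else (\<Union>j\<in>Order_Relation.underS r i. Seq r j A))"
proof -
  have wf: "wf (r - Id)" using wo by (simp add: well_order_on_def)
  define F where "F = (\<lambda>S i. if Order_Relation.underS r i = {} then A
            else if (\<exists>j. imm_pred r j i) then seq_cl (S (SOME j. imm_pred r j i))
            else (\<Union>j\<in>Order_Relation.underS r i. S j))"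
  have adm: "adm_wf (r - Id) F"
    unfolding adm_wf_def
  proof (intro allI impI)
    fix f g :: "'a \<Rightarrow> ('b set \<Rightarrow> real) set" and x
    assume fg: "\<forall>z. (z, x) \<in> r - Id \<longrightarrow> f z = g z"
    have U: "(\<Union>j\<in>Order_Relation.underS r x. f j) = (\<Union>j\<in>Order_Relation.underS r x. g j)"
      using fg by (auto simp: Order_Relation.underS_def)
    have P: "f (SOME j. imm_pred r j x) = g (SOME j. imm_pred r j x)" if "\<exists>j. imm_pred r j x"
    proof -
      have "imm_pred r (SOME j. imm_pred r j x) x" using someI_ex[OF that] .
      then show ?thesis using fg by (auto simp: imm_pred_def)
    qed
    show "F f x = F g x" unfolding F_def using U P by simp
  qed
  have "Seq r i A = wfrec (r - Id) F i" unfolding Seq_def F_def ..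
  also have "\<dots> = F (wfrec (r - Id) F) i" by (subst wfrec_fixpoint[OF wf adm]) rule
  also have "\<dots> = F (\<lambda>j. Seq r j A) i" unfolding Seq_def F_def ..
  finally show ?thesis unfolding F_def .
qed

lemma sum_ind_single:
  fixes q :: "'a \<Rightarrow> real"
  assumes "finite T"
  shows "(\<Sum>t\<in>T. indicator {t} x * q t) = (if x \<in> T then q x else 0)"
proof -
  have "(\<Sum>t\<in>T. indicator {t} x * q t) = (\<Sum>t\<in>T. if x = t then q t else 0)"
    by (intro sum.cong) (auto simp: indicator_def)
  also have "\<dots> = (if x \<in> T then q x else 0)" using assms by (simp add: sum.delta)
  finally show ?thesis .
qed

lemma D_dsum_mult:
  fixes N :: "'a::t2_space measure" and c g :: "'a \<Rightarrow> real"
  assumes S: "sets N = sets borel" and h: "integrable N h" and F: "finite F"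
    and eq: "(\<lambda>B. \<Sum>t\<in>F. c t * dirac t B) = D N h"
    and g: "g \<in> borel_measurable borel" and gb: "\<And>x. \<bar>g x\<bar> \<le> cg"
  shows "D N (\<lambda>x. g x * h x) = (\<lambda>B. \<Sum>t\<in>F. (c t * g t) * dirac t B)"
proof
  fix B :: "'a set"
  have sing: "{t} \<in> sets borel" for t :: 'a by (simp add: borel_closed)
  have gN: "g \<in> borel_measurable N" using g by (simp add: measurable_cong_sets[OF S refl])
  have single: "D N h {t} = c t" if t: "t \<in> F" for t
  proof -
    have "D N h {t} = (\<Sum>s\<in>F. c s * dirac s {t})" using fun_cong[OF eq, of "{t}"] by simp
    also have "\<dots> = (\<Sum>s\<in>F. if s = t then c s else 0)"
      using sing by (intro sum.cong) (auto simp: dirac_def)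
    also have "\<dots> = c t" using F t by (simp add: sum.delta')
    finally show ?thesis .
  qed
  have Fc: "- F \<in> sets borel" using F by (simp add: borel_open finite_imp_closed open_Compl)
  have null: "AE x in N. x \<in> - F \<longrightarrow> h x = 0"
  proof (rule D_zero_AE[OF S h Fc])
    fix E assume E: "E \<in> sets borel" "E \<subseteq> - F"
    have "D N h E = (\<Sum>t\<in>F. c t * dirac t E)" using fun_cong[OF eq, of E] by simp
    also have "\<dots> = 0" using E by (auto simp: dirac_def intro!: sum.neutral)
    finally show "D N h E = 0" .
  qed
  show "D N (\<lambda>x. g x * h x) B = (\<Sum>t\<in>F. (c t * g t) * dirac t B)"
  proof (cases "B \<in> sets borel")
    case B: True
    have FB: "finite (F \<inter> B)" using F by simp
    have "D N (\<lambda>x. g x * h x) B = (\<integral>x. indicator B x * (g x * h x) \<partial>N)" using B by (simp add: D_def)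
    also have "\<dots> = (\<integral>x. (\<Sum>t\<in>F \<inter> B. indicator {t} x * (g t * h x)) \<partial>N)"
    proof (rule integral_cong_AE)
      show "(\<lambda>x. indicator B x * (g x * h x)) \<in> borel_measurable N"
        using B S gN h by auto
      show "(\<lambda>x. \<Sum>t\<in>F \<inter> B. indicator {t} x * (g t * h x)) \<in> borel_measurable N"
        using S h sing by (intro borel_measurable_sum) auto
      show "AE x in N. indicator B x * (g x * h x) = (\<Sum>t\<in>F \<inter> B. indicator {t} x * (g t * h x))"
        using null
      proof eventually_elim
        case (elim x)
        have "(\<Sum>t\<in>F \<inter> B. indicator {t} x * (g t * h x)) = (if x \<in> F \<inter> B then g x * h x else 0)"
          using sum_ind_single[OF FB, of x "\<lambda>t. g t * h x"] by simp
        then show ?case using elim by (cases "x \<in> F"; cases "x \<in> B"; simp add: indicator_def)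
      qed
    qed
    also have "\<dots> = (\<Sum>t\<in>F \<inter> B. (\<integral>x. indicator {t} x * (g t * h x) \<partial>N))"
    proof (rule Bochner_Integration.integral_sum)
      fix t
      have "{t} \<in> sets N" using sing S by simp
      then show "integrable N (\<lambda>x. indicator {t} x * (g t * h x))"
        by (rule int_ind) (rule Bochner_Integration.integrable_mult_right[OF h])
    qed
    also have "\<dots> = (\<Sum>t\<in>F \<inter> B. g t * D N h {t})"
    proof (intro sum.cong refl)
      fix t
      have "(\<integral>x. indicator {t} x * (g t * h x) \<partial>N) = (\<integral>x. g t * (indicator {t} x * h x) \<partial>N)"
        by (simp add: mult.left_commute)
      also have "\<dots> = g t * (\<integral>x. indicator {t} x * h x \<partial>N)" by (rule integral_mult_right_zero)
      finally show "(\<integral>x. indicator {t} x * (g t * h x) \<partial>N) = g t * D N h {t}"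
        using sing by (simp add: D_def)
    qed
    also have "\<dots> = (\<Sum>t\<in>F \<inter> B. c t * g t)" using single by (intro sum.cong) auto
    also have "\<dots> = (\<Sum>t\<in>F. if t \<in> B then c t * g t else 0)"
      by (rule sum.inter_restrict[OF F])
    also have "\<dots> = (\<Sum>t\<in>F. (c t * g t) * dirac t B)"
      by (intro sum.cong refl) (simp add: dirac_def B)
    finally show ?thesis .
  qed (simp add: D_def dirac_def)
qed

lemma cont_meas: "continuous_on UNIV g \<Longrightarrow> sets N = sets borel \<Longrightarrow> (g :: 'a::topological_space \<Rightarrow> real) \<in> borel_measurable N"
proof -
  assume g: "continuous_on UNIV g" and S: "sets N = sets borel"
  show ?thesis using borel_measurable_continuous_onI[OF g] by (simp add: measurable_cong_sets[OF S refl])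
qed

lemma MK_rep:
  fixes \<mu> :: "'a::t2_space set \<Rightarrow> real"
  assumes "\<mu> \<in> MK"
  shows "\<exists>N h. rad N \<and> integrable N h \<and> \<mu> = D N h"
proof -
  obtain N h s where "rad N" "integrable N h" "integrable N s" "\<mu> = D N h" "\<mu> = D N s"
    using MK_rep2[OF assms assms] by blast
  then show ?thesis by blast
qed

lemma sint_nonneg_pos:
  fixes \<mu> :: "'a::t2_space set \<Rightarrow> real"
  assumes K: "compact (UNIV :: 'a set)" and m: "\<mu> \<in> MK_pos" and f: "continuous_on UNIV f" and fn: "\<And>x. 0 \<le> f x"
  shows "0 \<le> sint \<mu> f"
proof -
  obtain N h where R: "rad N" and h: "integrable N h" and mh: "\<mu> = D N h"
    using MK_rep[of \<mu>] m by (auto simp: MK_pos_def)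
  have S: "sets N = sets borel" using R by (simp add: rad_def)
  obtain cf where cf: "\<And>x. \<bar>f x\<bar> \<le> cf" using cont_bdd[OF K f] by blast
  have hn: "AE x in N. 0 \<le> h x" using D_nonneg_AE[OF S h] m mh by (auto simp: MK_pos_def)
  have "sint \<mu> f = (\<integral>x. h x * f x \<partial>N)"
    unfolding mh by (rule sint_D[OF R h borel_measurable_continuous_onI[OF f] cf])
  also have "0 \<le> \<dots>"
  proof (rule integral_nonneg_AE)
    show "AE x in N. 0 \<le> h x * f x" using hn by eventually_elim (simp add: fn)
  qed
  finally show ?thesis .
qed

lemma wlim_pos:
  fixes \<mu> :: "'a::t2_space set \<Rightarrow> real"
  assumes K: "compact (UNIV :: 'a set)" and sm: "\<And>n. s n \<in> MK_pos" and mM: "\<mu> \<in> MK"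
    and conv: "wstar_conv s \<mu>"
  shows "\<mu> \<in> MK_pos"
proof -
  obtain N h where R: "rad N" and h: "integrable N h" and mh: "\<mu> = D N h"
    using MK_rep[OF mM] by blast
  have S: "sets N = sets borel" using R by (simp add: rad_def)
  have F: "finite_measure N" using R by (simp add: rad_def)
  have snn: "0 \<le> sint \<mu> f" if f: "continuous_on UNIV f" and fn: "\<And>x. 0 \<le> f x" for f
  proof -
    have "(\<lambda>n. sint (s n) f) \<longlonglongrightarrow> sint \<mu> f" using conv f by (simp add: wstar_conv_def)
    then show ?thesis
      by (rule LIMSEQ_le_const) (use sint_nonneg_pos[OF K sm f fn] in auto)
  qed
  have ha: "integrable N (\<lambda>x. \<bar>h x\<bar>)" using h by auto
  let ?Nh = "density N (\<lambda>x. ennreal \<bar>h x\<bar>)"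
  have Rh: "rad ?Nh" by (rule dens_rad[OF R ha]) simp
  have hm: "h \<in> borel_measurable N" using h by auto
  have "0 \<le> \<mu> B" for B
  proof (cases "B \<in> sets borel")
    case B: True
    show ?thesis
    proof (rule field_le_epsilon[of 0 "\<mu> B", simplified])
      fix e :: real assume e: "0 < e"
      obtain g :: "'a \<Rightarrow> real" where g: "continuous_on UNIV g" "\<forall>x. 0 \<le> g x \<and> g x \<le> 1"
          "(\<integral>x. \<bar>g x - indicator B x\<bar> \<partial>?Nh) < e"
        using ind_approx[OF K Rh B e] by blast
      have gN: "g \<in> borel_measurable N" by (rule cont_meas[OF g(1) S])
      have BN: "B \<in> sets N" using B S by simp
      have dm: "(\<lambda>x. g x - indicator B x) \<in> borel_measurable N" using gN BN by measurable
      have db: "\<bar>g x - indicator B x\<bar> \<le> 1" for x using g(2) by (auto simp: indicator_def)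
      have e1: "(\<integral>x. \<bar>g x - indicator B x\<bar> \<partial>?Nh) = (\<integral>x. \<bar>h x\<bar> * \<bar>g x - indicator B x\<bar> \<partial>N)"
        using dm hm by (subst integral_density) auto
      have i1: "integrable N (\<lambda>x. h x * (g x - indicator B x))" by (rule int_bdd_mult[OF h dm db])
      have i2: "integrable N (\<lambda>x. h x * g x)"
        by (rule int_bdd_mult[OF h gN]) (use g(2) in auto)
      have "0 \<le> sint \<mu> g" using snn[OF g(1)] g(2) by auto
      also have "sint \<mu> g = (\<integral>x. h x * g x \<partial>N)"
        unfolding mh by (rule sint_D[OF R h borel_measurable_continuous_onI[OF g(1)]]) (use g(2) in auto)
      also have "\<dots> = (\<integral>x. indicator B x * h x + h x * (g x - indicator B x) \<partial>N)"
        by (rule Bochner_Integration.integral_cong) (auto simp: algebra_simps)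
      also have "\<dots> = \<mu> B + (\<integral>x. h x * (g x - indicator B x) \<partial>N)"
        using B by (subst Bochner_Integration.integral_add[OF int_ind[OF BN h] i1]) (simp add: mh D_def)
      also have "(\<integral>x. h x * (g x - indicator B x) \<partial>N) \<le> (\<integral>x. \<bar>h x\<bar> * \<bar>g x - indicator B x\<bar> \<partial>N)"
        using integral_norm_bound[of N "\<lambda>x. h x * (g x - indicator B x)"] by (simp add: abs_mult)
      finally show "0 \<le> \<mu> B + e" using g(3) e1 by simp
    qed
  next
    case False then show ?thesis by (simp add: mh D_def)
  qed
  then show ?thesis using mM by (simp add: MK_pos_def)
qed

lemma int_bdd_mult':
  fixes h g :: "'a \<Rightarrow> real"
  assumes h: "integrable N h" and g: "g \<in> borel_measurable N" and c: "\<And>x. \<bar>g x\<bar> \<le> c"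
  shows "integrable N (\<lambda>x. g x * h x)"
  using int_bdd_mult[OF h g c] by (simp add: mult.commute)

lemma sint_mult:
  fixes N :: "'a::t2_space measure"
  assumes K: "compact (UNIV :: 'a set)" and R: "rad N" and h: "integrable N h"
    and g: "continuous_on UNIV g" and f: "continuous_on UNIV f"
  shows "sint (D N (\<lambda>x. g x * h x)) f = sint (D N h) (\<lambda>x. g x * f x)"
proof -
  have S: "sets N = sets borel" using R by (simp add: rad_def)
  obtain cg where cg: "\<And>x. \<bar>g x\<bar> \<le> cg" using cont_bdd[OF K g] by blast
  have gf: "continuous_on UNIV (\<lambda>x. g x * f x)" using g f by (intro continuous_intros)
  obtain cf where cf: "\<And>x. \<bar>f x\<bar> \<le> cf" using cont_bdd[OF K f] by blast
  obtain cgf where cgf: "\<And>x. \<bar>g x * f x\<bar> \<le> cgf" using cont_bdd[OF K gf] by blast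
  have gh: "integrable N (\<lambda>x. g x * h x)" by (rule int_bdd_mult'[OF h cont_meas[OF g S] cg])
  have "sint (D N (\<lambda>x. g x * h x)) f = (\<integral>x. (g x * h x) * f x \<partial>N)"
    by (rule sint_D[OF R gh borel_measurable_continuous_onI[OF f] cf])
  also have "\<dots> = (\<integral>x. h x * (g x * f x) \<partial>N)"
    by (rule Bochner_Integration.integral_cong) (simp_all add: mult_ac)
  also have "\<dots> = sint (D N h) (\<lambda>x. g x * f x)"
    by (rule sint_D[OF R h borel_measurable_continuous_onI[OF gf] cgf, symmetric])
  finally show ?thesis .
qed

lemma mult_conv:
  fixes N :: "'a::t2_space measure"
  assumes K: "compact (UNIV :: 'a set)" and conv: "wstar_conv s \<mu>" and R: "rad N"
    and h: "integrable N h" and mh: "\<mu> = D N h"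
    and RP: "\<And>n. rad (NN n) \<and> integrable (NN n) (HH n) \<and> s n = D (NN n) (HH n)"
    and g: "continuous_on UNIV g"
  shows "wstar_conv (\<lambda>n. D (NN n) (\<lambda>x. g x * HH n x)) (D N (\<lambda>x. g x * h x))"
  unfolding wstar_conv_def
proof (intro allI impI)
  fix f :: "'a \<Rightarrow> real" assume f: "continuous_on UNIV f"
  have gf: "continuous_on UNIV (\<lambda>x. g x * f x)" using g f by (intro continuous_intros)
  have "(\<lambda>n. sint (s n) (\<lambda>x. g x * f x)) \<longlonglongrightarrow> sint \<mu> (\<lambda>x. g x * f x)"
    using conv gf by (simp add: wstar_conv_def)
  moreover have "sint (s n) (\<lambda>x. g x * f x) = sint (D (NN n) (\<lambda>x. g x * HH n x)) f" for n
    using sint_mult[OF K _ _ g f, of "NN n" "HH n"] RP[of n] by simp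
  moreover have "sint \<mu> (\<lambda>x. g x * f x) = sint (D N (\<lambda>x. g x * h x)) f"
    using sint_mult[OF K R h g f] mh by simp
  ultimately show "(\<lambda>n. sint (D (NN n) (\<lambda>x. g x * HH n x)) f) \<longlonglongrightarrow> sint (D N (\<lambda>x. g x * h x)) f"
    by simp
qed

lemma mult_pos:
  fixes N :: "'a::t2_space measure"
  assumes K: "compact (UNIV :: 'a set)" and R: "rad N" and h: "integrable N h"
    and mp: "D N h \<in> MK_pos" and g: "continuous_on UNIV g" and gn: "\<And>x. 0 \<le> g x"
  shows "D N (\<lambda>x. g x * h x) \<in> MK_pos"
proof -
  have S: "sets N = sets borel" using R by (simp add: rad_def)
  obtain cg where cg: "\<And>x. \<bar>g x\<bar> \<le> cg" using cont_bdd[OF K g] by blast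
  have gh: "integrable N (\<lambda>x. g x * h x)" by (rule int_bdd_mult'[OF h cont_meas[OF g S] cg])
  have hn: "AE x in N. 0 \<le> h x" using D_nonneg_AE[OF S h] mp by (auto simp: MK_pos_def)
  have "0 \<le> D N (\<lambda>x. g x * h x) B" for B
  proof (cases "B \<in> sets borel")
    case True
    have "0 \<le> (\<integral>x. indicator B x * (g x * h x) \<partial>N)"
    proof (rule integral_nonneg_AE)
      show "AE x in N. 0 \<le> indicator B x * (g x * h x)" using hn
        by eventually_elim (simp add: gn)
    qed
    then show ?thesis using True by (simp add: D_def)
  qed (simp add: D_def)
  then show ?thesis using D_MK[OF R gh] by (simp add: MK_pos_def)
qed

lemma base_case:
  fixes \<mu> :: "'a::t2_space set \<Rightarrow> real"
  assumes K: "compact (UNIV :: 'a set)" and m: "\<mu> \<in> co_Delta"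
    and R: "rad N" and h: "integrable N h" and mh: "\<mu> = D N h" and g: "continuous_on UNIV g"
  shows "D N (\<lambda>x. g x * h x) \<in> span_Delta \<and> ((\<forall>x. 0 \<le> g x) \<longrightarrow> D N (\<lambda>x. g x * h x) \<in> MK_pos \<inter> span_Delta)"
proof -
  have S: "sets N = sets borel" using R by (simp add: rad_def)
  obtain F c where F: "finite F" and c: "\<And>t. t \<in> F \<Longrightarrow> 0 \<le> c t" and eq: "\<mu> = (\<lambda>B. \<Sum>t\<in>F. c t * dirac t B)"
    using m unfolding co_Delta_def by blast
  obtain cg where cg: "\<And>x. \<bar>g x\<bar> \<le> cg" using cont_bdd[OF K g] by blast
  have E: "D N (\<lambda>x. g x * h x) = (\<lambda>B. \<Sum>t\<in>F. (c t * g t) * dirac t B)"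
    using eq mh by (intro D_dsum_mult[OF S h F _ borel_measurable_continuous_onI[OF g] cg]) simp
  have "D N (\<lambda>x. g x * h x) \<in> span_Delta" unfolding E span_Delta_def using F
    by (intro CollectI exI[of _ F] exI[of _ "\<lambda>t. c t * g t"]) simp
  moreover have "D N (\<lambda>x. g x * h x) \<in> MK_pos \<inter> span_Delta" if gn: "\<forall>x. 0 \<le> g x"
    unfolding E using F c gn by (intro dsum_pos) auto
  ultimately show ?thesis by blast
qed

lemma main_ind:
  fixes r :: "'i rel"
  assumes K: "compact (UNIV :: 'a::t2_space set)" and wo: "Well_order r"
  shows "\<forall>\<mu> \<in> Seq r i (co_Delta :: ('a set \<Rightarrow> real) set). \<mu> \<in> MK_pos \<and>
     (\<forall>N h g. rad N \<longrightarrow> integrable N h \<longrightarrow> \<mu> = D N h \<longrightarrow> continuous_on UNIV g \<longrightarrow>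
        D N (\<lambda>x. g x * h x) \<in> Seq r i span_Delta \<and>
        ((\<forall>x. 0 \<le> g x) \<longrightarrow> D N (\<lambda>x. g x * h x) \<in> Seq r i (MK_pos \<inter> span_Delta)))"
proof -
  have wf: "wf (r - Id)" using wo by (simp add: well_order_on_def)
  show ?thesis
  proof (induction i rule: wf_induct[OF wf])
    case (1 i)
    have U: "Seq r i X = (if Order_Relation.underS r i = {} then X
            else if (\<exists>j. imm_pred r j i) then seq_cl (Seq r (SOME j. imm_pred r j i) X)
            else (\<Union>j\<in>Order_Relation.underS r i. Seq r j X))" for X :: "('a set \<Rightarrow> real) set"
      by (rule Seq_unfold[OF wo])
    show ?case
    proof (cases "Order_Relation.underS r i = {}")
      case True
      then have U0: "Seq r i X = X" for X :: "('a set \<Rightarrow> real) set" using U by simp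
      show ?thesis unfolding U0
      proof (intro ballI conjI allI impI)
        fix \<mu> :: "'a set \<Rightarrow> real" assume m: "\<mu> \<in> co_Delta"
        show "\<mu> \<in> MK_pos" using co_pos m by blast
        fix N h g assume "rad N" "integrable N h" "\<mu> = D N h" "continuous_on UNIV (g :: 'a \<Rightarrow> real)"
        note bc = base_case[OF K m this]
        show "D N (\<lambda>x. g x * h x) \<in> span_Delta" using bc by blast
        assume "\<forall>x. 0 \<le> g x"
        then show "D N (\<lambda>x. g x * h x) \<in> MK_pos \<inter> span_Delta" using bc by blast
      qed
    next
      case nz: False
      show ?thesis
      proof (cases "\<exists>j. imm_pred r j i")
        case True
        define j where "j = (SOME j. imm_pred r j i)"
        have ij: "imm_pred r j i" unfolding j_def using someI_ex[OF True] .
        then have jr: "(j, i) \<in> r - Id" by (auto simp: imm_pred_def)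
        have IH: "\<forall>\<mu> \<in> Seq r j (co_Delta :: ('a set \<Rightarrow> real) set). \<mu> \<in> MK_pos \<and>
           (\<forall>N h g. rad N \<longrightarrow> integrable N h \<longrightarrow> \<mu> = D N h \<longrightarrow> continuous_on UNIV g \<longrightarrow>
              D N (\<lambda>x. g x * h x) \<in> Seq r j span_Delta \<and>
              ((\<forall>x. 0 \<le> g x) \<longrightarrow> D N (\<lambda>x. g x * h x) \<in> Seq r j (MK_pos \<inter> span_Delta)))"
          using 1 jr by blast
        have U1: "Seq r i X = seq_cl (Seq r j X)" for X :: "('a set \<Rightarrow> real) set"
          using U nz True unfolding j_def by simp
        show ?thesis unfolding U1
        proof (intro ballI)
          fix \<mu> :: "'a set \<Rightarrow> real" assume m: "\<mu> \<in> seq_cl (Seq r j co_Delta)"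
          then obtain s where mM: "\<mu> \<in> MK" and s: "\<And>n. s n \<in> Seq r j co_Delta" and conv: "wstar_conv s \<mu>"
            unfolding seq_cl_def by blast
          have sp: "s n \<in> MK_pos" for n using IH s by blast
          have mp: "\<mu> \<in> MK_pos" by (rule wlim_pos[OF K sp mM conv])
          have "\<forall>n. \<exists>p. rad (fst p) \<and> integrable (fst p) (snd p) \<and> s n = D (fst p) (snd p)"
          proof
            fix n
            obtain N' h' where "rad N'" "integrable N' h'" "s n = D N' h'"
              using MK_rep[of "s n"] sp[of n] by (auto simp: MK_pos_def)
            then show "\<exists>p. rad (fst p) \<and> integrable (fst p) (snd p) \<and> s n = D (fst p) (snd p)"
              by (intro exI[of _ "(N', h')"]) simp
          qed
          then obtain P where P: "\<And>n. rad (fst (P n)) \<and> integrable (fst (P n)) (snd (P n)) \<and> s n = D (fst (P n)) (snd (P n))"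
            using choice by metis
          define NN where "NN n = fst (P n)" for n
          define HH where "HH n = snd (P n)" for n
          have RP: "\<And>n. rad (NN n) \<and> integrable (NN n) (HH n) \<and> s n = D (NN n) (HH n)"
            using P unfolding NN_def HH_def by blast
          show "\<mu> \<in> MK_pos \<and>
           (\<forall>N h g. rad N \<longrightarrow> integrable N h \<longrightarrow> \<mu> = D N h \<longrightarrow> continuous_on UNIV g \<longrightarrow>
              D N (\<lambda>x. g x * h x) \<in> seq_cl (Seq r j span_Delta) \<and>
              ((\<forall>x. 0 \<le> g x) \<longrightarrow> D N (\<lambda>x. g x * h x) \<in> seq_cl (Seq r j (MK_pos \<inter> span_Delta))))"
          proof (intro conjI allI impI mp)
            fix N h g assume R: "rad N" and h: "integrable N h" and mh: "\<mu> = D N h" and g: "continuous_on UNIV (g :: 'a \<Rightarrow> real)"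
            have S: "sets N = sets borel" using R by (simp add: rad_def)
            obtain cg where cg: "\<And>x. \<bar>g x\<bar> \<le> cg" using cont_bdd[OF K g] by blast
            have gh: "integrable N (\<lambda>x. g x * h x)" by (rule int_bdd_mult'[OF h cont_meas[OF g S] cg])
            have DM: "D N (\<lambda>x. g x * h x) \<in> MK" by (rule D_MK[OF R gh])
            have cv: "wstar_conv (\<lambda>n. D (NN n) (\<lambda>x. g x * HH n x)) (D N (\<lambda>x. g x * h x))"
              by (rule mult_conv[OF K conv R h mh RP g])
            have tn: "D (NN n) (\<lambda>x. g x * HH n x) \<in> Seq r j span_Delta \<and>
                ((\<forall>x. 0 \<le> g x) \<longrightarrow> D (NN n) (\<lambda>x. g x * HH n x) \<in> Seq r j (MK_pos \<inter> span_Delta))" for n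
              using IH s[of n] RP[of n] g by blast
            show "D N (\<lambda>x. g x * h x) \<in> seq_cl (Seq r j span_Delta)"
              unfolding seq_cl_def using DM cv tn
              by (intro CollectI conjI exI[of _ "\<lambda>n. D (NN n) (\<lambda>x. g x * HH n x)"]) auto
            assume gn: "\<forall>x. 0 \<le> g x"
            have "D N (\<lambda>x. g x * h x) \<in> MK_pos"
              by (rule mult_pos[OF K R h _ g]) (use mp mh gn in auto)
            then show "D N (\<lambda>x. g x * h x) \<in> seq_cl (Seq r j (MK_pos \<inter> span_Delta))"
              unfolding seq_cl_def using DM cv tn gn
              by (intro CollectI conjI exI[of _ "\<lambda>n. D (NN n) (\<lambda>x. g x * HH n x)"]) auto
          qed
        qed
      next
        case False
        have U2: "Seq r i X = (\<Union>j\<in>Order_Relation.underS r i. Seq r j X)" for X :: "('a set \<Rightarrow> real) set"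
          using U nz False by simp
        show ?thesis unfolding U2
        proof (intro ballI)
          fix \<mu> :: "'a set \<Rightarrow> real" assume "\<mu> \<in> (\<Union>j\<in>Order_Relation.underS r i. Seq r j co_Delta)"
          then obtain j where j: "j \<in> Order_Relation.underS r i" and m: "\<mu> \<in> Seq r j co_Delta" by blast
          have jr: "(j, i) \<in> r - Id" using j by (auto simp: Order_Relation.underS_def)
          have IH: "\<mu> \<in> MK_pos \<and>
           (\<forall>N h g. rad N \<longrightarrow> integrable N h \<longrightarrow> \<mu> = D N h \<longrightarrow> continuous_on UNIV g \<longrightarrow>
              D N (\<lambda>x. g x * h x) \<in> Seq r j span_Delta \<and>
              ((\<forall>x. 0 \<le> g x) \<longrightarrow> D N (\<lambda>x. g x * h x) \<in> Seq r j (MK_pos \<inter> span_Delta)))"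
            using 1 jr m by blast
          then show "\<mu> \<in> MK_pos \<and>
           (\<forall>N h g. rad N \<longrightarrow> integrable N h \<longrightarrow> \<mu> = D N h \<longrightarrow> continuous_on UNIV g \<longrightarrow>
              D N (\<lambda>x. g x * h x) \<in> (\<Union>j\<in>Order_Relation.underS r i. Seq r j span_Delta) \<and>
              ((\<forall>x. 0 \<le> g x) \<longrightarrow> D N (\<lambda>x. g x * h x) \<in> (\<Union>j\<in>Order_Relation.underS r i. Seq r j (MK_pos \<inter> span_Delta))))"
            using j by blast
        qed
      qed
    qed
  qed
qed

lemma final_conv:
  fixes N :: "'a::t2_space measure"
  assumes K: "compact (UNIV :: 'a set)" and R: "rad N" and h: "integrable N h" and s: "integrable N s"
    and hz: "AE x in N. s x = 0 \<longrightarrow> h x = 0"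
    and G: "\<And>n. continuous_on UNIV (G n)"
    and Gi: "\<And>n. integrable N (\<lambda>x. \<bar>s x\<bar> * \<bar>G n x - h x / s x\<bar>)"
    and Gb: "\<And>n. (\<integral>x. \<bar>s x\<bar> * \<bar>G n x - h x / s x\<bar> \<partial>N) < inverse (real (Suc n))"
  shows "wstar_conv (\<lambda>n. D N (\<lambda>x. G n x * s x)) (D N h)"
  unfolding wstar_conv_def
proof (intro allI impI)
  fix f :: "'a \<Rightarrow> real" assume f: "continuous_on UNIV f"
  have S: "sets N = sets borel" using R by (simp add: rad_def)
  obtain cf where cf: "\<And>x. \<bar>f x\<bar> \<le> cf" using cont_bdd[OF K f] by blast
  have cf0: "0 \<le> cf" using cf[of undefined] by simp
  have fN: "f \<in> borel_measurable N" by (rule cont_meas[OF f S])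
  have fb: "f \<in> borel_measurable borel" by (rule borel_measurable_continuous_onI[OF f])
  define A where "A n = sint (D N (\<lambda>x. G n x * s x)) f - sint (D N h) f" for n
  have bnd: "norm (A n) \<le> cf * inverse (real (Suc n))" for n
  proof -
    obtain cg where cg: "\<And>x. \<bar>G n x\<bar> \<le> cg" using cont_bdd[OF K G[of n]] by blast
    have GN: "G n \<in> borel_measurable N" by (rule cont_meas[OF G[of n] S])
    have Gs: "integrable N (\<lambda>x. G n x * s x)" by (rule int_bdd_mult'[OF s GN cg])
    have i1: "integrable N (\<lambda>x. (G n x * s x) * f x)" by (rule int_bdd_mult[OF Gs fN cf])
    have i2: "integrable N (\<lambda>x. h x * f x)" by (rule int_bdd_mult[OF h fN cf])
    have d: "integrable N (\<lambda>x. G n x * s x - h x)" using Gs h by (rule Bochner_Integration.integrable_diff)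
    have "A n = (\<integral>x. (G n x * s x) * f x \<partial>N) - (\<integral>x. h x * f x \<partial>N)"
      unfolding A_def by (simp add: sint_D[OF R Gs fb cf] sint_D[OF R h fb cf])
    also have "\<dots> = (\<integral>x. (G n x * s x) * f x - h x * f x \<partial>N)"
      by (rule Bochner_Integration.integral_diff[OF i1 i2, symmetric])
    also have "\<dots> = (\<integral>x. (G n x * s x - h x) * f x \<partial>N)"
      by (rule Bochner_Integration.integral_cong) (simp_all add: left_diff_distrib)
    finally have An: "A n = (\<integral>x. (G n x * s x - h x) * f x \<partial>N)" .
    have i3: "integrable N (\<lambda>x. (G n x * s x - h x) * f x)" by (rule int_bdd_mult[OF d fN cf])
    have "norm (A n) \<le> (\<integral>x. norm ((G n x * s x - h x) * f x) \<partial>N)"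
      unfolding An by (rule integral_norm_bound)
    also have "\<dots> \<le> (\<integral>x. cf * \<bar>s x\<bar> * \<bar>G n x - h x / s x\<bar> \<partial>N)"
    proof (rule integral_mono_AE)
      show "integrable N (\<lambda>x. norm ((G n x * s x - h x) * f x))" using i3 by auto
      show "integrable N (\<lambda>x. cf * \<bar>s x\<bar> * \<bar>G n x - h x / s x\<bar>)"
        using Bochner_Integration.integrable_mult_right[OF Gi[of n], of cf] by (simp add: mult.assoc)
      show "AE x in N. norm ((G n x * s x - h x) * f x) \<le> cf * \<bar>s x\<bar> * \<bar>G n x - h x / s x\<bar>"
        using hz
      proof eventually_elim
        case (elim x)
        have e: "\<bar>G n x * s x - h x\<bar> = \<bar>s x\<bar> * \<bar>G n x - h x / s x\<bar>"
        proof (cases "s x = 0")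
          case True then show ?thesis using elim by simp
        next
          case False
          have "s x * (G n x - h x / s x) = G n x * s x - h x" using False by (simp add: right_diff_distrib mult.commute)
          then show ?thesis by (metis abs_mult)
        qed
        have "norm ((G n x * s x - h x) * f x) = \<bar>G n x * s x - h x\<bar> * \<bar>f x\<bar>" by (simp add: abs_mult)
        also have "\<dots> \<le> \<bar>G n x * s x - h x\<bar> * cf" using cf[of x] by (intro mult_left_mono) auto
        also have "\<dots> = cf * \<bar>s x\<bar> * \<bar>G n x - h x / s x\<bar>" using e by (simp add: mult_ac)
        finally show ?case .
      qed
    qed
    also have "\<dots> = cf * (\<integral>x. \<bar>s x\<bar> * \<bar>G n x - h x / s x\<bar> \<partial>N)"
      unfolding mult.assoc by (rule integral_mult_right_zero)
    also have "\<dots> \<le> cf * inverse (real (Suc n))" using Gb[of n] cf0 by (intro mult_left_mono) auto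
    finally show ?thesis .
  qed
  have "(\<lambda>n. cf * inverse (real (Suc n))) \<longlonglongrightarrow> 0"
    using tendsto_mult_right_zero[OF LIMSEQ_inverse_real_of_nat, of cf] by simp
  then have "A \<longlonglongrightarrow> 0" by (rule Lim_null_comparison[OF always_eventually, OF allI, OF bnd])
  then have "(\<lambda>n. A n + sint (D N h) f) \<longlonglongrightarrow> 0 + sint (D N h) f" by (intro tendsto_add) auto
  then show "(\<lambda>n. sint (D N (\<lambda>x. G n x * s x)) f) \<longlonglongrightarrow> sint (D N h) f" by (simp add: A_def)
qed

theorem lemma2p2:
  fixes r :: "'i rel" and \<alpha> :: 'i
    and \<mu> \<nu> :: "'a::t2_space set \<Rightarrow> real"
  assumes K_compact: "compact (UNIV :: 'a set)"
    and wo: "Well_order r" and \<alpha>_in: "\<alpha> \<in> Field r"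
    and \<alpha>_countable: "countable (Order_Relation.underS r \<alpha>)"
    and \<mu>_in: "\<mu> \<in> Seq r \<alpha> co_Delta"
    and \<nu>_M: "\<nu> \<in> MK"
    and ac: "abs_cont \<nu> \<mu>"
  shows "\<nu> \<in> seq_cl (Seq r \<alpha> span_Delta)
         \<and> (\<nu> \<in> MK_pos \<longrightarrow> \<nu> \<in> seq_cl (Seq r \<alpha> (MK_pos \<inter> span_Delta)))"
proof -
  note K = K_compact
  have MI: "\<mu> \<in> MK_pos \<and>
     (\<forall>N h g. rad N \<longrightarrow> integrable N h \<longrightarrow> \<mu> = D N h \<longrightarrow> continuous_on UNIV g \<longrightarrow>
        D N (\<lambda>x. g x * h x) \<in> Seq r \<alpha> span_Delta \<and>
        ((\<forall>x. 0 \<le> g x) \<longrightarrow> D N (\<lambda>x. g x * h x) \<in> Seq r \<alpha> (MK_pos \<inter> span_Delta)))"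
    using main_ind[OF K wo, of \<alpha>] \<mu>_in by blast
  have mP: "\<mu> \<in> MK_pos" using MI by blast
  then have mM: "\<mu> \<in> MK" by (simp add: MK_pos_def)
  obtain N h s where R: "rad N" and hI: "integrable N h" and sI: "integrable N s"
    and nh: "\<nu> = D N h" and ms: "\<mu> = D N s"
    using MK_rep2[OF \<nu>_M mM] by blast
  have S: "sets N = sets borel" using R by (simp add: rad_def)
  have sm: "s \<in> borel_measurable N" using sI by auto
  have hm: "h \<in> borel_measurable N" using hI by auto
  have smb: "s \<in> borel_measurable borel" using sm by (simp add: measurable_cong_sets[OF S refl])
  have Zs: "{x. s x = 0} \<in> sets borel" using smb by measurable
  have hz0: "AE x in N. x \<in> {x. s x = 0} \<longrightarrow> h x = 0"
  proof (rule D_zero_AE[OF S hI Zs])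
    fix E assume E: "E \<in> sets borel" "E \<subseteq> {x. s x = 0}"
    have "tot_var \<mu> E = D N (\<lambda>x. \<bar>s x\<bar>) E" unfolding ms by (rule tot_var_D[OF S sI])
    also have "\<dots> = (\<integral>x. indicator E x * \<bar>s x\<bar> \<partial>N)" using E by (simp add: D_def)
    also have "\<dots> = (\<integral>x. 0 \<partial>N)"
      by (rule Bochner_Integration.integral_cong) (use E in \<open>auto simp: indicator_def\<close>)
    finally have "tot_var \<mu> E = 0" by simp
    then have "\<nu> E = 0" using ac E by (simp add: abs_cont_def)
    then show "D N h E = 0" using nh by simp
  qed
  have hz: "AE x in N. s x = 0 \<longrightarrow> h x = 0" using hz0 by simp
  let ?Ns = "density N (\<lambda>x. ennreal \<bar>s x\<bar>)"
  have saI: "integrable N (\<lambda>x. \<bar>s x\<bar>)" using sI by auto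
  have RNs: "rad ?Ns" by (rule dens_rad[OF R saI]) simp
  have FNs: "finite_measure ?Ns" using RNs by (simp add: rad_def)
  have SNs: "sets ?Ns = sets borel" using RNs by (simp add: rad_def)
  define k where "k x = h x / s x" for x
  have km: "k \<in> borel_measurable N" unfolding k_def using hm sm by measurable
  have sam: "(\<lambda>x. \<bar>s x\<bar>) \<in> borel_measurable N" using sm by measurable
  have kNs: "integrable ?Ns k"
  proof -
    have "integrable N (\<lambda>x. \<bar>s x\<bar> * k x)"
    proof (rule Bochner_Integration.integrable_bound[OF hI])
      show "(\<lambda>x. \<bar>s x\<bar> * k x) \<in> borel_measurable N" using km sm by measurable
      show "AE x in N. norm (\<bar>s x\<bar> * k x) \<le> norm (h x)"
      proof (rule AE_I2)
        fix x show "norm (\<bar>s x\<bar> * k x) \<le> norm (h x)"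
          by (cases "s x = 0") (auto simp: k_def abs_mult abs_divide)
      qed
    qed
    then show ?thesis by (subst integrable_density[OF km sam]) auto
  qed
  have trans: "integrable N (\<lambda>x. \<bar>s x\<bar> * \<bar>g x - k x\<bar>) \<and>
      (\<integral>x. \<bar>g x - k x\<bar> \<partial>?Ns) = (\<integral>x. \<bar>s x\<bar> * \<bar>g x - k x\<bar> \<partial>N)"
    if g: "continuous_on UNIV g" for g
  proof -
    have gNs: "integrable ?Ns g" by (rule cont_int[OF K FNs SNs g])
    have i: "integrable ?Ns (\<lambda>x. \<bar>g x - k x\<bar>)" using gNs kNs by auto
    have gm: "g \<in> borel_measurable N" by (rule cont_meas[OF g S])
    have dm: "(\<lambda>x. \<bar>g x - k x\<bar>) \<in> borel_measurable N" using gm km by measurable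
    have "integrable N (\<lambda>x. \<bar>s x\<bar> * \<bar>g x - k x\<bar>)"
      using i by (subst (asm) integrable_density[OF dm sam]) auto
    moreover have "(\<integral>x. \<bar>g x - k x\<bar> \<partial>?Ns) = (\<integral>x. \<bar>s x\<bar> * \<bar>g x - k x\<bar> \<partial>N)"
      by (subst integral_density[OF dm sam]) auto
    ultimately show ?thesis by blast
  qed
  have "\<forall>n. \<exists>g. continuous_on UNIV g \<and> (\<integral>x. \<bar>g x - k x\<bar> \<partial>?Ns) < inverse (real (Suc n))"
    using cont_approx[OF K RNs kNs] by simp
  then obtain G where G: "\<And>n. continuous_on UNIV (G n)"
      and Gb0: "\<And>n. (\<integral>x. \<bar>G n x - k x\<bar> \<partial>?Ns) < inverse (real (Suc n))"
    using choice by metis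
  have Gi: "integrable N (\<lambda>x. \<bar>s x\<bar> * \<bar>G n x - h x / s x\<bar>)" for n
    using trans[OF G[of n]] unfolding k_def by blast
  have Gb: "(\<integral>x. \<bar>s x\<bar> * \<bar>G n x - h x / s x\<bar> \<partial>N) < inverse (real (Suc n))" for n
    using trans[OF G[of n]] Gb0[of n] unfolding k_def by simp
  have cv: "wstar_conv (\<lambda>n. D N (\<lambda>x. G n x * s x)) \<nu>"
    unfolding nh by (rule final_conv[OF K R hI sI hz G Gi Gb])
  have inS: "D N (\<lambda>x. G n x * s x) \<in> Seq r \<alpha> span_Delta" for n
    using MI R sI ms G[of n] by blast
  have P1: "\<nu> \<in> seq_cl (Seq r \<alpha> span_Delta)"
    unfolding seq_cl_def using \<nu>_M cv inS
    by (intro CollectI conjI exI[of _ "\<lambda>n. D N (\<lambda>x. G n x * s x)"]) auto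
  have P2: "\<nu> \<in> seq_cl (Seq r \<alpha> (MK_pos \<inter> span_Delta))" if nP: "\<nu> \<in> MK_pos"
  proof -
    have hpos: "AE x in N. 0 \<le> h x" using D_nonneg_AE[OF S hI] nP nh by (auto simp: MK_pos_def)
    have spos: "AE x in N. 0 \<le> s x" using D_nonneg_AE[OF S sI] mP ms by (auto simp: MK_pos_def)
    define G' where "G' n x = max 0 (G n x)" for n x
    have G': "continuous_on UNIV (G' n)" for n unfolding G'_def using G[of n] by (intro continuous_intros)
    have G'n: "\<forall>x. 0 \<le> G' n x" for n by (simp add: G'_def)
    have G'i: "integrable N (\<lambda>x. \<bar>s x\<bar> * \<bar>G' n x - h x / s x\<bar>)" for n
      using trans[OF G'[of n]] unfolding k_def by blast
    have G'b: "(\<integral>x. \<bar>s x\<bar> * \<bar>G' n x - h x / s x\<bar> \<partial>N) < inverse (real (Suc n))" for n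
    proof -
      have "(\<integral>x. \<bar>s x\<bar> * \<bar>G' n x - h x / s x\<bar> \<partial>N) \<le> (\<integral>x. \<bar>s x\<bar> * \<bar>G n x - h x / s x\<bar> \<partial>N)"
      proof (rule integral_mono_AE[OF G'i Gi])
        show "AE x in N. \<bar>s x\<bar> * \<bar>G' n x - h x / s x\<bar> \<le> \<bar>s x\<bar> * \<bar>G n x - h x / s x\<bar>"
          using hpos spos
        proof eventually_elim
          case (elim x)
          have "0 \<le> h x / s x" using elim by simp
          moreover have aux: "\<bar>max 0 a - q\<bar> \<le> \<bar>a - q\<bar>" if "0 \<le> q" for a q :: real
            using that by (cases "0 \<le> a") (auto simp: max_def)
          ultimately have "\<bar>G' n x - h x / s x\<bar> \<le> \<bar>G n x - h x / s x\<bar>" unfolding G'_def by blast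
          then show ?case by (intro mult_left_mono) auto
        qed
      qed
      then show ?thesis using Gb[of n] by simp
    qed
    have cv': "wstar_conv (\<lambda>n. D N (\<lambda>x. G' n x * s x)) \<nu>"
      unfolding nh by (rule final_conv[OF K R hI sI hz G' G'i G'b])
    have inS': "D N (\<lambda>x. G' n x * s x) \<in> Seq r \<alpha> (MK_pos \<inter> span_Delta)" for n
      using MI R sI ms G'[of n] G'n[of n] by blast
    show ?thesis
      unfolding seq_cl_def using \<nu>_M cv' inS'
      by (intro CollectI conjI exI[of _ "\<lambda>n. D N (\<lambda>x. G' n x * s x)"]) auto
  qed
  show ?thesis using P1 P2 by blast
qed

end
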